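(* Let $K$ be a maximal compact subgroup of a complex reductive group $G$, fix an $\mathrm{Ad}_K$-invariant Euclidean inner product $\langle\cdot,\cdot\rangle$ on $i\mathfrak k$, and let $p_{i\mathfrak k},p_{\mathfrak k}$ be the projections for $\mathfrak g=\mathfrak k\oplus i\mathfrak k$. Let $s,\dot s\in i\mathfrak k$ and write $\dot s=\lambda+[k,s]$ with $\lambda\in i z_{\mathfrak k}(s)$, $k\in z_{\mathfrak k}(s)^\perp\subset\mathfrak k$. Put $\sigma:=(d_s\exp)(\dot s)\,e^{-s}\in\mathfrak g$ (right translation to $\mathfrak g$ of the differential of $\exp:\mathfrak g\to G$ at $s$ applied to $\dot s$). Then: (1) $\sigma=\lambda+(k-\mathrm{Ad}_{e^s}k)$; (2) $\langle\dot s,p_{i\mathfrak k}(\sigma)\rangle\ge\|\dot s\|^2$; (3) $\langle[p_{\mathfrak k}(\sigma),s],p_{i\mathfrak k}(\sigma)\rangle\le0$, with equality if and only if $\dot s\in i z_{\mathfrak k}(s)$.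
   Context: $z_{\mathfrak k}(s)=\{u\in\mathfrak k:[u,s]=0\}$ and $z_{\mathfrak k}(s)^\perp$ is its orthogonal complement in $\mathfrak k$ (with respect to the inner product transported by multiplication by $i$). Every $\dot s\in i\mathfrak k$ admits such a decomposition since $i\mathfrak k=i z_{\mathfrak k}(s)\oplus[\mathfrak k,s]$. *)

theory Defs
  imports "HOL-Analysis.Analysis"
begin

type_synonym 'n cmat = "complex^'n^'n"

fun mpow :: "'n::finite cmat \<Rightarrow> nat \<Rightarrow> 'n cmat" where
  "mpow A 0 = mat 1"
| "mpow A (Suc k) = A ** mpow A k"

definition mexp :: "'n::finite cmat \<Rightarrow> 'n cmat" where
  "mexp A = (\<Sum>k. (1 / fact k) *\<^sub>R mpow A k)"

definition cscale :: "complex \<Rightarrow> 'n::finite cmat \<Rightarrow> 'n cmat" where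
  "cscale c A = (\<chi> i j. c * A $ i $ j)"

definition adj :: "'n::finite cmat \<Rightarrow> 'n cmat" where
  "adj A = (\<chi> i j. cnj (A $ j $ i))"

definition brk :: "'n::finite cmat \<Rightarrow> 'n cmat \<Rightarrow> 'n cmat" where
  "brk X Y = X ** Y - Y ** X"

inductive_set polyfun :: "('n::finite cmat \<Rightarrow> complex) set" where
  pconst: "(\<lambda>A. c) \<in> polyfun"
| pcoord: "(\<lambda>A. A $ i $ j) \<in> polyfun"
| padd: "p \<in> polyfun \<Longrightarrow> q \<in> polyfun \<Longrightarrow> (\<lambda>A. p A + q A) \<in> polyfun"
| pmult: "p \<in> polyfun \<Longrightarrow> q \<in> polyfun \<Longrightarrow> (\<lambda>A. p A * q A) \<in> polyfun"

definition algebraic_subgroup :: "'n::finite cmat set \<Rightarrow> bool" where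
  "algebraic_subgroup G \<longleftrightarrow>
     mat 1 \<in> G \<and> (\<forall>A\<in>G. \<forall>B\<in>G. A ** B \<in> G) \<and> (\<forall>A\<in>G. matrix_inv A \<in> G) \<and>
     (\<exists>P \<subseteq> polyfun. G = {A. invertible A \<and> (\<forall>p\<in>P. p A = 0)})"

text \<open>Complex reductive group, realized as a self-adjoint algebraic subgroup of GL_n(C).\<close>
definition complex_reductive :: "'n::finite cmat set \<Rightarrow> bool" where
  "complex_reductive G \<longleftrightarrow> algebraic_subgroup G \<and> (\<forall>A\<in>G. adj A \<in> G)"

definition maxK :: "'n::finite cmat set \<Rightarrow> 'n cmat set" where
  "maxK G = {A \<in> G. A ** adj A = mat 1}"

definition lie_alg :: "'n::finite cmat set \<Rightarrow> 'n cmat set" where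
  "lie_alg H = {X. \<forall>t::real. mexp (t *\<^sub>R X) \<in> H}"

definition kk :: "'n::finite cmat set \<Rightarrow> 'n cmat set" where
  "kk G = lie_alg (maxK G)"

definition ik :: "'n::finite cmat set \<Rightarrow> 'n cmat set" where
  "ik G = cscale \<i> ` kk G"

definition p_k :: "'n::finite cmat set \<Rightarrow> 'n cmat \<Rightarrow> 'n cmat" where
  "p_k G X = (THE u. u \<in> kk G \<and> X - u \<in> ik G)"

definition p_ik :: "'n::finite cmat set \<Rightarrow> 'n cmat \<Rightarrow> 'n cmat" where
  "p_ik G X = (THE v. v \<in> ik G \<and> X - v \<in> kk G)"

definition euclid_ip_on :: "'n::finite cmat set \<Rightarrow> ('n cmat \<Rightarrow> 'n cmat \<Rightarrow> real) \<Rightarrow> bool" where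
  "euclid_ip_on V ip \<longleftrightarrow>
     (\<forall>x\<in>V. \<forall>y\<in>V. ip x y = ip y x) \<and>
     (\<forall>x\<in>V. \<forall>y\<in>V. \<forall>z\<in>V. ip (x + y) z = ip x z + ip y z) \<and>
     (\<forall>x\<in>V. \<forall>y\<in>V. \<forall>c::real. ip (c *\<^sub>R x) y = c * ip x y) \<and>
     (\<forall>x\<in>V. x \<noteq> 0 \<longrightarrow> ip x x > 0)"

text \<open>Centralizer of s in k and its orthogonal complement in k (inner product transported by i).\<close>
definition zk :: "'n::finite cmat set \<Rightarrow> 'n cmat \<Rightarrow> 'n cmat set" where
  "zk G s = {u \<in> kk G. brk u s = 0}"

definition zk_perp :: "'n::finite cmat set \<Rightarrow> ('n cmat \<Rightarrow> 'n cmat \<Rightarrow> real) \<Rightarrow> 'n cmat \<Rightarrow> 'n cmat set" where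
  "zk_perp G ip s = {u \<in> kk G. \<forall>v \<in> zk G s. ip (cscale \<i> u) (cscale \<i> v) = 0}"

end

theory Submission
  imports Defs
begin


section \<open>Complex matrices as a Banach algebra\<close>

lemma norm_le_l1_gen: "norm x \<le> (\<Sum>i\<in>UNIV. norm (x $ i))"
  by (simp add: norm_vec_def L2_set_le_sum)

lemma matrix_add_rdistrib': "((B + C) ** A) = (B ** A) + (C ** A)"
  by (vector matrix_matrix_mult_def sum.distrib[symmetric] field_simps)

lemma norm_axis_gen: "norm (axis j (c::'a::real_normed_vector)) = norm c"
  by (simp add: norm_vec_def axis_def L2_set_def if_distrib if_distribR cong: if_cong)

lemma cmat_entry_le_onorm:
  fixes A :: "'n::finite cmat"
  shows "norm (A $ i $ j) \<le> onorm ((*v) A)"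
proof -
  have "(A *v axis j 1) $ i = A $ i $ j"
    by (simp add: matrix_vector_mult_def axis_def if_distrib if_distribR cong: if_cong)
  moreover have "norm ((A *v axis j 1) $ i) \<le> norm (A *v axis j 1)" by (rule Finite_Cartesian_Product.norm_nth_le)
  ultimately have "norm (A $ i $ j) \<le> norm (A *v axis j 1)" by simp
  also have "\<dots> \<le> onorm ((*v) A) * norm (axis j (1::complex))"
    using onorm [OF matrix_vector_mul_bounded_linear, of A "axis j 1"] by auto
  finally show ?thesis by (simp add: norm_axis_gen)
qed

lemma onorm_le_cmat_entries:
  fixes A :: "'n::finite cmat"
  shows "onorm ((*v) A) \<le> (\<Sum>i\<in>UNIV. \<Sum>j\<in>UNIV. norm (A $ i $ j))"
proof (rule onorm_le)
  fix x :: "complex^'n"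
  have "norm (A *v x) \<le> (\<Sum>i\<in>UNIV. norm ((A *v x) $ i))"
    by (rule norm_le_l1_gen)
  also have "\<dots> \<le> (\<Sum>i\<in>UNIV. \<Sum>j\<in>UNIV. norm (A $ i $ j) * norm x)"
  proof (rule sum_mono)
    fix i
    have "norm ((A *v x) $ i) \<le> norm (\<Sum>j\<in>UNIV. A $ i $ j * x $ j)"
      by (simp add: matrix_vector_mult_def)
    also have "\<dots> \<le> (\<Sum>j\<in>UNIV. norm (A $ i $ j * x $ j))"
      by (rule norm_sum)
    also have "\<dots> \<le> (\<Sum>j\<in>UNIV. norm (A $ i $ j) * norm x)"
      by (rule sum_mono) (simp add: norm_mult mult_left_mono Finite_Cartesian_Product.norm_nth_le)
    finally show "norm ((A *v x) $ i) \<le> (\<Sum>j\<in>UNIV. norm (A $ i $ j) * norm x)" .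
  qed
  finally show "norm (A *v x) \<le> (\<Sum>i\<in>UNIV. \<Sum>j\<in>UNIV. norm (A $ i $ j)) * norm x"
    by (simp add: sum_distrib_right)
qed

lemma cmat_norm_le_onorm:
  fixes A :: "'n::finite cmat"
  shows "norm A \<le> real CARD('n) * real CARD('n) * onorm ((*v) A)"
proof -
  have "norm A \<le> (\<Sum>i\<in>UNIV. norm (A $ i))" by (rule norm_le_l1_gen)
  also have "\<dots> \<le> (\<Sum>i\<in>(UNIV::'n set). \<Sum>j\<in>(UNIV::'n set). onorm ((*v) A))"
  proof (rule sum_mono)
    fix i
    have "norm (A $ i) \<le> (\<Sum>j\<in>UNIV. norm (A $ i $ j))" by (rule norm_le_l1_gen)
    also have "\<dots> \<le> (\<Sum>j\<in>(UNIV::'n set). onorm ((*v) A))"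
      by (rule sum_mono) (rule cmat_entry_le_onorm)
    finally show "norm (A $ i) \<le> (\<Sum>j\<in>(UNIV::'n set). onorm ((*v) A))" .
  qed
  finally show ?thesis by simp
qed

lemma onorm_le_cmat_norm:
  fixes A :: "'n::finite cmat"
  shows "onorm ((*v) A) \<le> real CARD('n) * real CARD('n) * norm A"
proof -
  have "onorm ((*v) A) \<le> (\<Sum>i\<in>UNIV. \<Sum>j\<in>UNIV. norm (A $ i $ j))" by (rule onorm_le_cmat_entries)
  also have "\<dots> \<le> (\<Sum>i\<in>(UNIV::'n set). \<Sum>j\<in>(UNIV::'n set). norm A)"
    by (intro sum_mono) (metis Finite_Cartesian_Product.norm_nth_le order_trans)
  finally show ?thesis by simp
qed

lemma cmat_eq_if_mult_eq:
  fixes A B :: "'n::finite cmat"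
  assumes "\<And>x. A *v x = B *v x" shows "A = B"
  using assms by (metis matrix_eq)

typedef (overloaded) 'n mm = "UNIV :: ('n::finite) cmat set" morphisms mrep mabs by auto

setup_lifting type_definition_mm

instantiation mm :: (finite) real_normed_algebra_1
begin

lift_definition zero_mm :: "'a mm" is 0 .
lift_definition one_mm :: "'a mm" is "mat 1" .
lift_definition plus_mm :: "'a mm \<Rightarrow> 'a mm \<Rightarrow> 'a mm" is "(+)" .
lift_definition minus_mm :: "'a mm \<Rightarrow> 'a mm \<Rightarrow> 'a mm" is "(-)" .
lift_definition uminus_mm :: "'a mm \<Rightarrow> 'a mm" is "uminus" .
lift_definition times_mm :: "'a mm \<Rightarrow> 'a mm \<Rightarrow> 'a mm" is "(**)" .
lift_definition scaleR_mm :: "real \<Rightarrow> 'a mm \<Rightarrow> 'a mm" is "scaleR" .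
lift_definition norm_mm :: "'a mm \<Rightarrow> real" is "\<lambda>A. onorm ((*v) A)" .

definition sgn_mm :: "'a mm \<Rightarrow> 'a mm" where "sgn_mm x = inverse (norm x) *\<^sub>R x"
definition dist_mm :: "'a mm \<Rightarrow> 'a mm \<Rightarrow> real" where "dist_mm x y = norm (x - y)"
definition uniformity_mm :: "('a mm \<times> 'a mm) filter" where
  "uniformity_mm = (INF e\<in>{0<..}. principal {(x, y). dist x y < e})"
definition open_mm :: "'a mm set \<Rightarrow> bool" where
  "open_mm U \<longleftrightarrow> (\<forall>x\<in>U. \<forall>\<^sub>F (x', y) in uniformity. x' = x \<longrightarrow> y \<in> U)"

lemma mv_add: "(*v) (A + B) = (\<lambda>x. (*v) A x + (*v) B x)" for A B :: "'a cmat"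
  by (rule ext) (simp add: matrix_vector_mult_add_rdistrib)

lemma mv_scale: "(*v) (c *\<^sub>R A) = (\<lambda>x. c *\<^sub>R (*v) A x)" for A :: "'a cmat"
  by (rule ext) (simp add: matrix_vector_mult_def vec_eq_iff scaleR_sum_right)

lemma mv_mult: "(*v) (A ** B) = (*v) A \<circ> (*v) B" for A B :: "'a cmat"
  by (rule ext) (simp add: matrix_vector_mul_assoc)

lemma mv_one: "(*v) (mat 1 :: 'a cmat) = (\<lambda>x. x)"
  by (rule ext) simp

instance
proof
  fix a b c :: "'a mm" and r s :: real
  show "a + b + c = a + (b + c)" by transfer (simp add: add.assoc)
  show "a + b = b + a" by transfer (simp add: add.commute)
  show "0 + a = a" by transfer simp
  show "- a + a = 0" by transfer simp
  show "a - b = a + - b" by transfer simp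
  show "r *\<^sub>R (a + b) = r *\<^sub>R a + r *\<^sub>R b" by transfer (simp add: scaleR_add_right)
  show "(r + s) *\<^sub>R a = r *\<^sub>R a + s *\<^sub>R a" by transfer (simp add: scaleR_add_left)
  show "r *\<^sub>R s *\<^sub>R a = (r * s) *\<^sub>R a" by transfer simp
  show "1 *\<^sub>R a = a" by transfer simp
  show "a * b * c = a * (b * c)" by transfer (simp add: matrix_mul_assoc)
  show "(a + b) * c = a * c + b * c" by transfer (simp add: matrix_add_rdistrib')
  show "a * (b + c) = a * b + a * c" by transfer (simp add: matrix_add_ldistrib)
  show "1 * a = a" by transfer simp
  show "a * 1 = a" by transfer simp
  show "(0::'a mm) \<noteq> 1"
  proof transfer
    show "(0::'a cmat) \<noteq> mat 1"
      by (auto simp: vec_eq_iff mat_def)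
  qed
  show "r *\<^sub>R a * b = r *\<^sub>R (a * b)" by transfer (simp add: scalar_matrix_assoc)
  show "a * r *\<^sub>R b = r *\<^sub>R (a * b)" by transfer (simp add: matrix_scalar_ac scalar_matrix_assoc)
  show "norm (a * b) \<le> norm a * norm b"
    by transfer (simp add: mv_mult onorm_compose)
  show "norm (1::'a mm) = 1"
    by transfer (simp add: mv_one onorm_id)
  show "norm (a + b) \<le> norm a + norm b"
    by transfer (simp add: mv_add onorm_triangle)
  show "norm (r *\<^sub>R a) = \<bar>r\<bar> * norm a"
    by transfer (simp add: mv_scale onorm_scaleR)
  show "(norm a = 0) = (a = 0)"
  proof transfer
    fix A :: "'a cmat"
    show "(onorm ((*v) A) = 0) = (A = 0)"
      using onorm_eq_0[OF matrix_vector_mul_bounded_linear, of A]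
      by (metis cmat_eq_if_mult_eq matrix_vector_mult_0)
  qed
  show "sgn a = inverse (norm a) *\<^sub>R a" by (simp add: sgn_mm_def)
  show "dist a b = norm (a - b)" by (simp add: dist_mm_def)
  show "(uniformity :: ('a mm \<times> 'a mm) filter) = (INF e\<in>{0<..}. principal {(x, y). dist x y < e})"
    by (simp add: uniformity_mm_def)
  show "\<And>U::'a mm set. open U = (\<forall>x\<in>U. \<forall>\<^sub>F (x', y) in uniformity. x' = x \<longrightarrow> y \<in> U)"
    by (simp add: open_mm_def)
qed
end

lemma mrep_add [simp]: "mrep (x + y) = mrep x + mrep y" by transfer simp
lemma mrep_diff [simp]: "mrep (x - y) = mrep x - mrep y" by transfer simp
lemma mrep_uminus [simp]: "mrep (- x) = - mrep x" by transfer simp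
lemma mrep_zero [simp]: "mrep 0 = 0" by transfer simp
lemma mrep_one [simp]: "mrep 1 = mat 1" by transfer simp
lemma mrep_mult [simp]: "mrep (x * y) = mrep x ** mrep y" by transfer simp
lemma mrep_scaleR [simp]: "mrep (c *\<^sub>R x) = c *\<^sub>R mrep x" by transfer simp
lemma norm_mm_eq: "norm x = onorm ((*v) (mrep x))" by transfer simp
lemma mrep_inject_iff [simp]: "mrep x = mrep y \<longleftrightarrow> x = y" by (simp add: mrep_inject)

lemma bounded_linear_mrep: "bounded_linear (mrep :: 'n::finite mm \<Rightarrow> 'n cmat)"
  by (rule bounded_linear_intro[where K="real CARD('n) * real CARD('n)"])
     (simp_all add: norm_mm_eq, metis cmat_norm_le_onorm mult.commute)

lemma bounded_linear_mabs: "bounded_linear (mabs :: 'n::finite cmat \<Rightarrow> 'n mm)"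
proof (rule bounded_linearI')
  fix x y :: "'n cmat" show "mabs (x + y) = mabs x + mabs y"
    by (metis mrep_add mrep_inverse mabs_inverse UNIV_I)
next
  fix c and x :: "'n cmat" show "mabs (c *\<^sub>R x) = c *\<^sub>R mabs x"
    by (metis mrep_scaleR mrep_inverse mabs_inverse UNIV_I)
qed

instance mm :: (finite) banach
proof
  fix X :: "nat \<Rightarrow> 'a mm"
  assume "Cauchy X"
  then have "Cauchy (\<lambda>n. mrep (X n))"
    by (rule bounded_linear.Cauchy[OF bounded_linear_mrep])
  then obtain L where "(\<lambda>n. mrep (X n)) \<longlonglongrightarrow> L"
    using Cauchy_convergent_iff convergent_def by blast
  then have "(\<lambda>n. mabs (mrep (X n))) \<longlonglongrightarrow> mabs L"
    by (rule bounded_linear.tendsto[OF bounded_linear_mabs])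
  then show "convergent X" by (auto simp: mrep_inverse convergent_def)
qed




section \<open>Exponential in the matrix Banach algebra\<close>

definition Dn :: "'n::finite mm \<Rightarrow> nat \<Rightarrow> 'n mm \<Rightarrow> 'n mm" where
  "Dn x n h = (\<Sum>j<n. x^j * h * x^(n - Suc j))"

lemma Dn_0 [simp]: "Dn x 0 h = 0"
  by (simp add: Dn_def)

lemma Dn_Suc: "Dn x (Suc n) h = h * x^n + x * Dn x n h"
proof -
  have "Dn x (Suc n) h = (\<Sum>j<Suc n. x^j * h * x^(Suc n - Suc j))" by (simp add: Dn_def)
  also have "\<dots> = x^0 * h * x^(Suc n - Suc 0) + (\<Sum>j<n. x^(Suc j) * h * x^(Suc n - Suc (Suc j)))"
    by (rule sum.lessThan_Suc_shift)
  also have "\<dots> = h * x^n + x * Dn x n h"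
    by (simp add: Dn_def sum_distrib_left mult.assoc)
  finally show ?thesis .
qed

lemma has_derivative_power_mm:
  fixes x :: "'n::finite mm"
  shows "((\<lambda>y. y^n) has_derivative Dn x n) (at x within S)"
proof (induction n)
  case 0
  have "Dn x 0 = (\<lambda>_. 0)" by (simp add: fun_eq_iff)
  then show ?case by simp
next
  case (Suc n)
  have "((\<lambda>y. y * y^n) has_derivative (\<lambda>h. x * Dn x n h + h * x^n)) (at x within S)"
    using has_derivative_mult[OF has_derivative_ident Suc.IH] .
  moreover have "(\<lambda>h. x * Dn x n h + h * x^n) = Dn x (Suc n)"
    by (simp add: fun_eq_iff Dn_Suc add.commute)
  ultimately show ?case by simp
qed

lemma norm_Dn_le:
  fixes x :: "'n::finite mm"
  assumes "norm x \<le> R"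
  shows "norm (Dn x (Suc n) h) \<le> real (Suc n) * R^n * norm h"
proof -
  have R: "0 \<le> R" using assms norm_ge_zero order_trans by blast
  have "norm (Dn x (Suc n) h) \<le> (\<Sum>j<Suc n. norm (x^j * h * x^(Suc n - Suc j)))"
    unfolding Dn_def by (rule norm_sum)
  also have "\<dots> \<le> (\<Sum>j<Suc n. R^n * norm h)"
  proof (rule sum_mono)
    fix j assume j: "j \<in> {..<Suc n}"
    have pj: "norm (x^j) \<le> R^j"
      using norm_power_ineq[of x j] power_mono[OF assms norm_ge_zero, of j] by linarith
    have pk: "norm (x^(Suc n - Suc j)) \<le> R^(Suc n - Suc j)"
      using norm_power_ineq[of x "Suc n - Suc j"] power_mono[OF assms norm_ge_zero, of "Suc n - Suc j"]
      by linarith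
    have "norm (x^j * h * x^(Suc n - Suc j)) \<le> norm (x^j * h) * norm (x^(Suc n - Suc j))"
      by (rule norm_mult_ineq)
    also have "\<dots> \<le> (norm (x^j) * norm h) * norm (x^(Suc n - Suc j))"
      by (rule mult_right_mono[OF norm_mult_ineq norm_ge_zero])
    also have "\<dots> \<le> (R^j * norm h) * R^(Suc n - Suc j)"
      by (rule mult_mono[OF mult_right_mono[OF pj norm_ge_zero] pk])
         (simp_all add: R)
    also have "\<dots> = R^n * norm h"
      using j by (simp add: power_add[symmetric] mult_ac)
    finally show "norm (x^j * h * x^(Suc n - Suc j)) \<le> R^n * norm h" .
  qed
  also have "\<dots> = real (Suc n) * R^n * norm h" by simp
  finally show ?thesis .
qed

definition Dexp :: "'n::finite mm \<Rightarrow> 'n mm \<Rightarrow> 'n mm" where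
  "Dexp x h = (\<Sum>n. Dn x n h /\<^sub>R fact n)"

lemma Dn_term_bound:
  fixes x :: "'n::finite mm"
  assumes "norm x \<le> R"
  shows "norm (Dn x (Suc n) h /\<^sub>R fact (Suc n)) \<le> R^n / fact n * norm h"
proof -
  have "norm (Dn x (Suc n) h /\<^sub>R fact (Suc n)) = norm (Dn x (Suc n) h) / fact (Suc n)"
    by (simp add: field_simps)
  also have "\<dots> \<le> real (Suc n) * R^n * norm h / fact (Suc n)"
    by (intro divide_right_mono norm_Dn_le assms) simp
  also have "\<dots> = R^n / fact n * norm h"
    unfolding fact_Suc of_nat_mult by (simp add: field_simps del: of_nat_Suc)
  finally show ?thesis .
qed

lemma summable_exp_real: "summable (\<lambda>n. (R::real)^n / fact n)"
  using summable_exp[of R] by (simp add: field_simps)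

lemma summable_Dn:
  fixes x :: "'n::finite mm"
  shows "summable (\<lambda>n. Dn x n h /\<^sub>R fact n)"
proof -
  have "summable (\<lambda>n. Dn x (Suc n) h /\<^sub>R fact (Suc n))"
    by (rule summable_comparison_test'[OF summable_mult2[OF summable_exp_real[of "norm x"], of "norm h"]])
       (rule Dn_term_bound, simp)
  then show ?thesis by (rule summable_Suc_iff[where f="\<lambda>n. Dn x n h /\<^sub>R fact n", THEN iffD1])
qed

lemma exp_has_derivative_mm:
  fixes x :: "'n::finite mm"
  shows "(exp has_derivative Dexp x) (at x)"
proof -
  define R where "R = norm x + 1"
  define S where "S = ball (0::'n mm) R"
  have xS: "x \<in> S" by (simp add: S_def R_def)
  have "\<exists>g. \<forall>y\<in>S. (\<lambda>n. y^n /\<^sub>R fact n) sums g y \<and> (g has_derivative Dexp y) (at y within S)"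
  proof (rule has_derivative_series[where f'="\<lambda>n y h. Dn y n h /\<^sub>R fact n"])
    show "convex S" by (simp add: S_def)
    show "((\<lambda>y. y^n /\<^sub>R fact n) has_derivative (\<lambda>h. Dn y n h /\<^sub>R fact n)) (at y within S)"
      if "y \<in> S" for n y
      using has_derivative_scaleR_right[OF has_derivative_power_mm[of n y S], of "inverse (fact n)"]
      by simp
    show "x \<in> S" by (rule xS)
    show "(\<lambda>n. x^n /\<^sub>R fact n) sums exp x" by (rule exp_converges)
    show "\<forall>\<^sub>F n in sequentially. \<forall>y\<in>S. \<forall>h. norm ((\<Sum>i<n. Dn y i h /\<^sub>R fact i) - Dexp y h) \<le> e * norm h"
      if e: "0 < e" for e
    proof -
      obtain N where N: "\<And>n. n \<ge> N \<Longrightarrow> norm (\<Sum>i. R^(i+n) / fact (i+n)) < e"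
        using suminf_exist_split[OF e summable_exp_real[of R]] by blast
      have "\<forall>y\<in>S. \<forall>h. norm ((\<Sum>i<n. Dn y i h /\<^sub>R fact i) - Dexp y h) \<le> e * norm h"
        if n: "n \<ge> Suc N" for n
      proof (intro ballI allI)
        fix y h assume y: "y \<in> S"
        have ny: "norm y \<le> R" using y by (simp add: S_def)
        obtain m where m: "n = Suc m" "m \<ge> N" using n by (cases n) auto
        define c where "c i = Dn y i h /\<^sub>R fact i" for i
        have sc: "summable c" unfolding c_def by (rule summable_Dn)
        have bnd: "norm (c (i + n)) \<le> R^(i+m) / fact (i+m) * norm h" for i
          using Dn_term_bound[OF ny, of "i+m" h] by (simp add: c_def m)
        have sR: "summable (\<lambda>i. R^(i+m) / fact (i+m))"
          using summable_iff_shift[where f="\<lambda>i. R^i / fact i" and k=m] summable_exp_real[of R] by simp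
        have "Dexp y h = (\<Sum>i. c (i + n)) + (\<Sum>i<n. c i)"
          unfolding Dexp_def c_def[symmetric] by (rule suminf_split_initial_segment[OF sc])
        then have "norm ((\<Sum>i<n. Dn y i h /\<^sub>R fact i) - Dexp y h) = norm (\<Sum>i. c (i + n))"
          by (simp add: c_def)
        also have "\<dots> \<le> (\<Sum>i. R^(i+m) / fact (i+m) * norm h)"
          by (rule norm_suminf_le[OF bnd summable_mult2[OF sR]])
        also have "\<dots> = (\<Sum>i. R^(i+m) / fact (i+m)) * norm h"
          by (rule suminf_mult2[OF sR, symmetric])
        also have "\<dots> \<le> e * norm h"
        proof (rule mult_right_mono)
          have "(\<Sum>i. R^(i+m) / fact (i+m)) \<le> norm (\<Sum>i. R^(i+m) / fact (i+m))" by simp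
          then show "(\<Sum>i. R^(i+m) / fact (i+m)) \<le> e" using N[OF m(2)] by linarith
        qed simp
        finally show "norm ((\<Sum>i<n. Dn y i h /\<^sub>R fact i) - Dexp y h) \<le> e * norm h" .
      qed
      then show ?thesis unfolding eventually_sequentially by blast
    qed
  qed
  then obtain g where g: "\<And>y. y \<in> S \<Longrightarrow> (\<lambda>n. y^n /\<^sub>R fact n) sums g y \<and> (g has_derivative Dexp y) (at y within S)"
    by blast
  have oS: "open S" by (simp add: S_def)
  have gd: "(g has_derivative Dexp x) (at x)"
  proof -
    have "(g has_derivative Dexp x) (at x within S)" using g[OF xS] by (rule conjunct2)
    then show ?thesis unfolding at_within_open[OF xS oS] .
  qed
  have ge: "g y = exp y" if y: "y \<in> S" for y
  proof -
    have "(\<lambda>n. y^n /\<^sub>R fact n) sums g y" using g[OF y] by (rule conjunct1)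
    from sums_unique2[OF this exp_converges] show ?thesis .
  qed
  show ?thesis
    by (rule has_derivative_transform_within_open[OF gd oS xS ge])
qed


lemma of_nat_mult_mm: "of_nat n * (y::'n::finite mm) = real n *\<^sub>R y"
  by (induction n) (simp_all add: algebra_simps)

lemma Dn_commuting:
  fixes x l :: "'n::finite mm"
  assumes "l * x = x * l"
  shows "Dn x (Suc n) l = real (Suc n) *\<^sub>R (l * x^n)"
proof (induction n)
  case 0 show ?case by (simp add: Dn_Suc)
next
  case (Suc n)
  have "Dn x (Suc (Suc n)) l = l * x^Suc n + x * (real (Suc n) *\<^sub>R (l * x^n))"
    by (simp only: Dn_Suc[of x "Suc n"] Suc)
  also have "x * (real (Suc n) *\<^sub>R (l * x^n)) = real (Suc n) *\<^sub>R (l * x^Suc n)"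
    by (simp add: mult.assoc[symmetric] assms[symmetric])
  finally show ?case by (simp add: algebra_simps scaleR_2)
qed

lemma Dn_bracket:
  fixes x k :: "'n::finite mm"
  shows "Dn x n (k * x - x * k) = k * x^n - x^n * k"
proof (induction n)
  case 0 show ?case by simp
next
  case (Suc n)
  have "Dn x (Suc n) (k * x - x * k) = (k * x - x * k) * x^n + x * (k * x^n - x^n * k)"
    by (simp only: Dn_Suc Suc)
  also have "\<dots> = k * x^Suc n - x^Suc n * k"
    by (simp add: algebra_simps power_commutes mult.assoc)
  finally show ?case .
qed

lemma Dexp_commuting:
  fixes x l :: "'n::finite mm"
  assumes "l * x = x * l"
  shows "Dexp x l = l * exp x"
proof -
  have "(\<lambda>m. Dn x (Suc m) l /\<^sub>R fact (Suc m)) = (\<lambda>m. l * (x^m /\<^sub>R fact m))"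
  proof
    fix m
    have "Dn x (Suc m) l /\<^sub>R fact (Suc m) = (real (Suc m) / fact (Suc m)) *\<^sub>R (l * x^m)"
      by (simp add: Dn_commuting[OF assms] divide_inverse_commute)
    also have "real (Suc m) / fact (Suc m) = inverse (fact m)"
      unfolding fact_Suc of_nat_mult by (simp add: field_simps del: of_nat_Suc)
    finally show "Dn x (Suc m) l /\<^sub>R fact (Suc m) = l * (x^m /\<^sub>R fact m)" by simp
  qed
  then have "(\<lambda>m. Dn x (Suc m) l /\<^sub>R fact (Suc m)) sums (l * exp x)"
    using sums_mult[OF exp_converges, of l x] by simp
  then have "(\<lambda>m. Dn x m l /\<^sub>R fact m) sums (l * exp x)"
    using sums_Suc_iff[where f="\<lambda>m. Dn x m l /\<^sub>R fact m"] by simp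
  then show ?thesis unfolding Dexp_def by (rule sums_unique[symmetric])
qed

lemma Dexp_bracket:
  fixes x k :: "'n::finite mm"
  shows "Dexp x (k * x - x * k) = k * exp x - exp x * k"
proof -
  have "(\<lambda>m. Dn x m (k * x - x * k) /\<^sub>R fact m) = (\<lambda>m. k * (x^m /\<^sub>R fact m) - (x^m /\<^sub>R fact m) * k)"
    by (simp add: fun_eq_iff Dn_bracket scaleR_diff_right)
  moreover have "(\<lambda>m. k * (x^m /\<^sub>R fact m) - (x^m /\<^sub>R fact m) * k) sums (k * exp x - exp x * k)"
    by (intro sums_diff sums_mult sums_mult2 exp_converges)
  ultimately show ?thesis unfolding Dexp_def by (simp add: sums_unique[symmetric])
qed

lemma Dexp_linear: "bounded_linear (Dexp (x::'n::finite mm))"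
  using exp_has_derivative_mm has_derivative_bounded_linear by blast

section \<open>Adjoint action\<close>

definition ad :: "'n::finite mm \<Rightarrow> 'n mm \<Rightarrow> 'n mm" where
  "ad a y = a * y - y * a"

lemma leibniz_mm:
  fixes a k :: "'n::finite mm"
  shows "a^n * k = (\<Sum>i\<le>n. real (n choose i) *\<^sub>R ((ad a ^^ i) k * a^(n-i)))"
proof (induction n)
  case 0 show ?case by simp
next
  case (Suc n)
  define Y where "Y i = (ad a ^^ i) k" for i
  have YS: "a * Y i = Y (Suc i) + Y i * a" for i
    by (simp add: Y_def ad_def)
  have "a^Suc n * k = a * (a^n * k)" by (simp add: mult.assoc)
  also have "\<dots> = (\<Sum>i\<le>n. real (n choose i) *\<^sub>R (a * Y i * a^(n-i)))"
    by (simp add: Suc Y_def sum_distrib_left mult.assoc)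
  also have "\<dots> = (\<Sum>i\<le>n. real (n choose i) *\<^sub>R (Y (Suc i) * a^(n-i)))
                  + (\<Sum>i\<le>n. real (n choose i) *\<^sub>R (Y i * a^(Suc n - i)))"
  proof -
    have "real (n choose i) *\<^sub>R (a * Y i * a^(n-i)) =
          real (n choose i) *\<^sub>R (Y (Suc i) * a^(n-i)) + real (n choose i) *\<^sub>R (Y i * a^(Suc n - i))"
      if "i \<in> {..n}" for i
    proof -
      have "Y i * a * a^(n-i) = Y i * a^(Suc n - i)"
        using that by (simp add: mult.assoc Suc_diff_le)
      then show ?thesis by (simp add: YS algebra_simps)
    qed
    then show ?thesis by (simp add: sum.distrib[symmetric])
  qed
  also have "(\<Sum>i\<le>n. real (n choose i) *\<^sub>R (Y i * a^(Suc n - i)))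
           = Y 0 * a^Suc n + (\<Sum>i\<le>n. real (n choose Suc i) *\<^sub>R (Y (Suc i) * a^(n - i)))"
  proof -
    have "(\<Sum>i\<le>n. real (n choose i) *\<^sub>R (Y i * a^(Suc n - i)))
        = (\<Sum>i\<le>Suc n. real (n choose i) *\<^sub>R (Y i * a^(Suc n - i)))"
      by simp
    also have "\<dots> = Y 0 * a^Suc n + (\<Sum>i\<le>n. real (n choose Suc i) *\<^sub>R (Y (Suc i) * a^(Suc n - Suc i)))"
      by (subst sum.atMost_Suc_shift) simp
    finally show ?thesis by simp
  qed
  also have "(\<Sum>i\<le>n. real (n choose i) *\<^sub>R (Y (Suc i) * a^(n-i))) +
      (Y 0 * a^Suc n + (\<Sum>i\<le>n. real (n choose Suc i) *\<^sub>R (Y (Suc i) * a^(n - i))))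
      = Y 0 * a^Suc n + (\<Sum>i\<le>n. real (Suc n choose Suc i) *\<^sub>R (Y (Suc i) * a^(n - i)))"
    by (simp add: sum.distrib[symmetric] scaleR_add_left)
  also have "\<dots> = (\<Sum>i\<le>Suc n. real (Suc n choose i) *\<^sub>R (Y i * a^(Suc n - i)))"
    by (subst sum.atMost_Suc_shift) simp
  finally show ?case by (simp add: Y_def)
qed

lemma norm_ad_le: "norm (ad a y) \<le> 2 * norm a * norm y"
proof -
  have "norm (ad a y) \<le> norm (a * y) + norm (y * a)" unfolding ad_def by (rule norm_triangle_ineq4)
  also have "\<dots> \<le> norm a * norm y + norm y * norm a" by (intro add_mono norm_mult_ineq)
  finally show ?thesis by simp
qed

lemma norm_ad_pow_le: "norm ((ad a ^^ n) k) \<le> (2 * norm a)^n * norm k"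
proof (induction n)
  case 0 show ?case by simp
next
  case (Suc n)
  have "norm ((ad a ^^ Suc n) k) \<le> 2 * norm a * norm ((ad a ^^ n) k)"
    by (simp add: norm_ad_le)
  also have "\<dots> \<le> 2 * norm a * ((2 * norm a)^n * norm k)"
    by (rule mult_left_mono[OF Suc]) simp
  finally show ?case by (simp add: mult_ac)
qed

lemma summable_ad_series:
  "summable (\<lambda>n. norm ((ad a ^^ n) k /\<^sub>R fact n))"
proof (rule summable_comparison_test'[OF summable_mult2[OF summable_exp_real[of "2 * norm a"], of "norm k"]])
  fix n :: nat
  have "norm (norm ((ad a ^^ n) k /\<^sub>R fact n)) = norm ((ad a ^^ n) k) / fact n"
    by (simp add: divide_inverse_commute)
  also have "\<dots> \<le> (2 * norm a)^n * norm k / fact n"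
    by (intro divide_right_mono norm_ad_pow_le) simp
  finally show "norm (norm ((ad a ^^ n) k /\<^sub>R fact n)) \<le> (2 * norm a)^n / fact n * norm k" by simp
qed

lemma summable_exp_norm: "summable (\<lambda>n. norm ((a::'n::finite mm)^n /\<^sub>R fact n))"
proof (rule summable_comparison_test'[OF summable_exp_real[of "norm a"]])
  fix n :: nat
  show "norm (norm (a^n /\<^sub>R fact n)) \<le> norm a^n / fact n"
    using divide_right_mono[OF norm_power_ineq[of a n], of "fact n"] by (simp add: divide_inverse_commute)
qed

lemma exp_Ad_series:
  fixes a k :: "'n::finite mm"
  shows "exp a * k * exp (- a) = (\<Sum>n. (ad a ^^ n) k /\<^sub>R fact n)"
proof -
  define Y where "Y n = (ad a ^^ n) k /\<^sub>R fact n" for n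
  define E where "E n = a^n /\<^sub>R fact n" for n
  have "(\<Sum>n. Y n) * (\<Sum>n. E n) = (\<Sum>n. \<Sum>i\<le>n. Y i * E (n - i))"
    unfolding Y_def E_def by (rule Cauchy_product[OF summable_ad_series summable_exp_norm])
  also have "(\<lambda>n. \<Sum>i\<le>n. Y i * E (n - i)) = (\<lambda>n. (a^n * k) /\<^sub>R fact n)"
  proof
    fix n
    have "(\<Sum>i\<le>n. Y i * E (n - i)) = (\<Sum>i\<le>n. (real (n choose i) / fact n) *\<^sub>R ((ad a ^^ i) k * a^(n-i)))"
    proof (rule sum.cong[OF refl])
      fix i assume "i \<in> {..n}"
      then have "i \<le> n" by simp
      then have "real (n choose i) / fact n = inverse (fact i) * inverse (fact (n - i))"
        by (simp add: binomial_fact field_simps)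
      then show "Y i * E (n - i) = (real (n choose i) / fact n) *\<^sub>R ((ad a ^^ i) k * a^(n-i))"
        by (simp add: Y_def E_def)
    qed
    also have "\<dots> = (a^n * k) /\<^sub>R fact n"
      by (simp add: leibniz_mm scaleR_sum_right divide_inverse_commute)
    finally show "(\<Sum>i\<le>n. Y i * E (n - i)) = (a^n * k) /\<^sub>R fact n" .
  qed
  also have "(\<Sum>n. (a^n * k) /\<^sub>R fact n) = exp a * k"
    using sums_mult2[OF exp_converges, of a k] by (simp add: sums_unique[symmetric])
  finally have "(\<Sum>n. Y n) * exp a = exp a * k"
    using exp_converges[of a] by (simp add: E_def sums_unique[symmetric])
  then have "exp a * k * exp (- a) = (\<Sum>n. Y n) * (exp a * exp (- a))"
    by (metis mult.assoc)
  then show ?thesis by (simp add: exp_minus_inverse Y_def)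
qed




section \<open>Lie product formula\<close>

lemma pow_diff_le:
  fixes p q :: "'n::finite mm"
  assumes p: "norm p \<le> M" and q: "norm q \<le> M"
  shows "norm (p^Suc n - q^Suc n) \<le> real (Suc n) * M^n * norm (p - q)"
proof (induction n)
  case 0 show ?case by simp
next
  case (Suc n)
  have M: "0 \<le> M" using p norm_ge_zero order_trans by blast
  have "p^Suc (Suc n) - q^Suc (Suc n) = p * (p^Suc n - q^Suc n) + (p - q) * q^Suc n"
    by (simp add: algebra_simps)
  then have "norm (p^Suc (Suc n) - q^Suc (Suc n)) \<le> norm (p * (p^Suc n - q^Suc n)) + norm ((p - q) * q^Suc n)"
    by (metis norm_triangle_ineq)
  also have "\<dots> \<le> norm p * norm (p^Suc n - q^Suc n) + norm (p - q) * norm (q^Suc n)"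
    by (intro add_mono norm_mult_ineq)
  also have "\<dots> \<le> M * (real (Suc n) * M^n * norm (p - q)) + norm (p - q) * M^Suc n"
  proof (intro add_mono mult_mono Suc p order_refl norm_ge_zero M)
    show "norm (q ^ Suc n) \<le> M ^ Suc n"
      using norm_power_ineq[of q "Suc n"] power_mono[OF q norm_ge_zero, of "Suc n"] by linarith
  qed
  also have "\<dots> = real (Suc (Suc n)) * M^Suc n * norm (p - q)"
    by (simp add: algebra_simps)
  finally show ?case .
qed

lemma exp_rem_bound:
  fixes x :: "'n::finite mm"
  shows "norm (exp x - 1 - x) \<le> norm x^2 * exp (norm x)"
proof -
  define f where "f n = x^n /\<^sub>R fact n" for n
  have sf: "summable f" unfolding f_def using exp_converges sums_summable by blast
  have "exp x = (\<Sum>n. f (n + 2)) + (\<Sum>i<2. f i)"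
    using suminf_split_initial_segment[OF sf, of 2] exp_converges[of x] sums_unique
    unfolding f_def by metis
  then have e: "exp x - 1 - x = (\<Sum>n. f (n + 2))"
    by (simp add: f_def eval_nat_numeral)
  define g where "g n = norm x^2 * (norm x^n / fact n)" for n
  have sg: "summable g" unfolding g_def by (rule summable_mult[OF summable_exp_real])
  have "norm (f (n + 2)) \<le> g n" for n
  proof -
    have "norm (f (n + 2)) \<le> norm x^(n+2) / fact (n + 2)"
      unfolding f_def
      using divide_right_mono[OF norm_power_ineq[of x "n+2"], of "fact (n+2)"]
      by (simp add: divide_inverse_commute)
    also have "\<dots> \<le> norm x^(n+2) / fact n"
    proof (rule divide_left_mono)
      show "fact n \<le> (fact (n + 2) :: real)" by (rule fact_mono) simp
    qed simp_all
    also have "\<dots> = g n" by (simp add: g_def power_add mult_ac power2_eq_square)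
    finally show ?thesis .
  qed
  then have "norm (exp x - 1 - x) \<le> suminf g"
    unfolding e by (rule norm_suminf_le[OF _ sg])
  also have "suminf g = norm x^2 * exp (norm x)"
  proof -
    have "(\<lambda>n. norm x^n / fact n) sums exp (norm x)"
      using exp_converges[of "norm x"] by (simp add: divide_inverse_commute)
    then have "g sums (norm x^2 * exp (norm x))" unfolding g_def by (rule sums_mult)
    then show ?thesis by (rule sums_unique[symmetric])
  qed
  finally show ?thesis .
qed

lemma exp_scaleR_nat: "exp (real n *\<^sub>R x) = exp x ^ n" for x :: "'n::finite mm"
proof (induction n)
  case 0 show ?case by simp
next
  case (Suc n)
  have "exp (real (Suc n) *\<^sub>R x) = exp (x + real n *\<^sub>R x)" by (simp add: algebra_simps)
  also have "\<dots> = exp x * exp (real n *\<^sub>R x)" by (rule exp_add_commuting) simp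
  finally show ?case by (simp add: Suc)
qed

lemma trotter_bound:
  fixes a b :: "'n::finite mm"
  assumes n: "n \<ge> 1"
  defines "c \<equiv> norm a + norm b"
  shows "norm ((exp (a /\<^sub>R real n) * exp (b /\<^sub>R real n))^n - exp (a + b))
          \<le> exp c * c^2 * (3 * exp c + 1 + c * exp c + exp c * exp c) / real n"
proof -
  define \<alpha> where "\<alpha> = a /\<^sub>R real n"
  define \<beta> where "\<beta> = b /\<^sub>R real n"
  define d where "d = c / real n"
  have npos: "real n > 0" using n by simp
  have c0: "0 \<le> c" by (simp add: c_def)
  have d0: "0 \<le> d" using c0 npos by (simp add: d_def)
  have dc: "d \<le> c"
  proof -
    have "c * 1 \<le> c * real n" by (rule mult_left_mono) (use n c0 in auto)
    then show ?thesis using npos by (simp add: d_def divide_le_eq)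
  qed
  have na: "norm \<alpha> = norm a / real n" by (simp add: \<alpha>_def divide_inverse_commute)
  have nb: "norm \<beta> = norm b / real n" by (simp add: \<beta>_def divide_inverse_commute)
  have nab: "norm \<alpha> + norm \<beta> = d" by (simp add: na nb d_def c_def add_divide_distrib)
  have a_le: "norm \<alpha> \<le> d" and b_le: "norm \<beta> \<le> d" using nab by auto
  have ab_le: "norm (\<alpha> + \<beta>) \<le> d" using nab norm_triangle_ineq by (metis)
  define r1 where "r1 = exp \<alpha> - 1 - \<alpha>"
  define r2 where "r2 = exp \<beta> - 1 - \<beta>"
  define r3 where "r3 = exp (\<alpha> + \<beta>) - 1 - (\<alpha> + \<beta>)"
  have rb: "norm (exp y - 1 - y) \<le> d^2 * exp c" if "norm y \<le> d" for y :: "'n mm"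
  proof -
    have "norm (exp y - 1 - y) \<le> norm y^2 * exp (norm y)" by (rule exp_rem_bound)
    also have "\<dots> \<le> d^2 * exp c"
      by (intro mult_mono power_mono that norm_ge_zero) (use that dc in auto)
    finally show ?thesis .
  qed
  have r1b: "norm r1 \<le> d^2 * exp c" unfolding r1_def by (rule rb[OF a_le])
  have r2b: "norm r2 \<le> d^2 * exp c" unfolding r2_def by (rule rb[OF b_le])
  have r3b: "norm r3 \<le> d^2 * exp c" unfolding r3_def by (rule rb[OF ab_le])
  have eb: "norm (exp \<beta>) \<le> exp c"
    using norm_exp[of \<beta>] b_le dc by (meson exp_le_cancel_iff order_trans)
  define P where "P = exp \<alpha> * exp \<beta>"
  define Q where "Q = exp (\<alpha> + \<beta>)"
  have PQ: "P - Q = r2 + \<alpha> * \<beta> + \<alpha> * r2 + r1 * exp \<beta> - r3"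
    by (simp add: P_def Q_def r1_def r2_def r3_def algebra_simps)
  have "norm (P - Q) \<le> norm r2 + norm \<alpha> * norm \<beta> + norm \<alpha> * norm r2 + norm r1 * norm (exp \<beta>) + norm r3"
  proof -
    have "norm (P - Q) \<le> norm (r2 + \<alpha> * \<beta> + \<alpha> * r2 + r1 * exp \<beta>) + norm r3"
      unfolding PQ by (rule norm_triangle_ineq4)
    also have "norm (r2 + \<alpha> * \<beta> + \<alpha> * r2 + r1 * exp \<beta>) \<le>
        norm r2 + norm (\<alpha> * \<beta>) + norm (\<alpha> * r2) + norm (r1 * exp \<beta>)"
    proof -
      have "norm (r2 + \<alpha> * \<beta> + \<alpha> * r2 + r1 * exp \<beta>) \<le> norm (r2 + \<alpha> * \<beta> + \<alpha> * r2) + norm (r1 * exp \<beta>)"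
        by (rule norm_triangle_ineq)
      moreover have "norm (r2 + \<alpha> * \<beta> + \<alpha> * r2) \<le> norm (r2 + \<alpha> * \<beta>) + norm (\<alpha> * r2)"
        by (rule norm_triangle_ineq)
      moreover have "norm (r2 + \<alpha> * \<beta>) \<le> norm r2 + norm (\<alpha> * \<beta>)"
        by (rule norm_triangle_ineq)
      ultimately show ?thesis by linarith
    qed
    also have "\<dots> \<le> norm r2 + norm \<alpha> * norm \<beta> + norm \<alpha> * norm r2 + norm r1 * norm (exp \<beta>)"
      using norm_mult_ineq[of \<alpha> \<beta>] norm_mult_ineq[of \<alpha> r2] norm_mult_ineq[of r1 "exp \<beta>"] by linarith
    finally show ?thesis by simp
  qed
  also have "\<dots> \<le> d^2 * exp c + d * d + c * (d^2 * exp c) + (d^2 * exp c) * exp c + d^2 * exp c"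
  proof -
    have t2: "norm \<alpha> * norm \<beta> \<le> d * d" by (rule mult_mono[OF a_le b_le d0 norm_ge_zero])
    have t3: "norm \<alpha> * norm r2 \<le> c * (d^2 * exp c)"
      by (rule mult_mono[OF order_trans[OF a_le dc] r2b c0 norm_ge_zero])
    have t4: "norm r1 * norm (exp \<beta>) \<le> (d^2 * exp c) * exp c"
      by (rule mult_mono[OF r1b eb _ norm_ge_zero]) simp
    show ?thesis using r2b t2 t3 t4 r3b by linarith
  qed
  also have "\<dots> = d^2 * (2 * exp c + 1 + c * exp c + exp c * exp c)"
    by (simp add: algebra_simps power2_eq_square)
  also have "\<dots> \<le> d^2 * (3 * exp c + 1 + c * exp c + exp c * exp c)"
    by (intro mult_left_mono) simp_all
  finally have PQb: "norm (P - Q) \<le> d^2 * (3 * exp c + 1 + c * exp c + exp c * exp c)" .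
  have Pb: "norm P \<le> exp d"
  proof -
    have "norm P \<le> norm (exp \<alpha>) * norm (exp \<beta>)" unfolding P_def by (rule norm_mult_ineq)
    also have "\<dots> \<le> exp (norm \<alpha>) * exp (norm \<beta>)"
      by (intro mult_mono norm_exp) simp_all
    also have "\<dots> = exp d" by (simp add: nab[symmetric] exp_add)
    finally show ?thesis .
  qed
  have Qb: "norm Q \<le> exp d"
    unfolding Q_def using norm_exp[of "\<alpha> + \<beta>"] ab_le by (meson exp_le_cancel_iff order_trans)
  obtain m where m: "n = Suc m" using n by (cases n) auto
  have Qn: "Q^n = exp (a + b)"
  proof -
    have "Q^n = exp (real n *\<^sub>R (\<alpha> + \<beta>))" unfolding Q_def by (rule exp_scaleR_nat[symmetric])
    also have "real n *\<^sub>R (\<alpha> + \<beta>) = a + b"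
      using npos by (simp add: \<alpha>_def \<beta>_def scaleR_add_right)
    finally show ?thesis .
  qed
  have "norm (P^n - Q^n) \<le> real n * exp d ^ m * norm (P - Q)"
    unfolding m by (rule pow_diff_le[OF Pb Qb])
  also have "\<dots> \<le> real n * exp c * (d^2 * (3 * exp c + 1 + c * exp c + exp c * exp c))"
  proof (intro mult_mono PQb order_refl)
    have "exp d ^ m = exp (real m * d)" by (simp add: exp_of_nat_mult[symmetric])
    also have "\<dots> \<le> exp c"
      using npos d0 by (simp add: m d_def field_simps)
    finally show "exp d ^ m \<le> exp c" .
  qed (simp_all add: c0)
  also have "\<dots> = exp c * c^2 * (3 * exp c + 1 + c * exp c + exp c * exp c) / real n"
    using npos by (simp add: d_def power2_eq_square field_simps)
  finally show ?thesis by (simp add: P_def Qn \<alpha>_def \<beta>_def)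
qed

lemma trotter:
  fixes a b :: "'n::finite mm"
  shows "(\<lambda>n. (exp (a /\<^sub>R real n) * exp (b /\<^sub>R real n))^n) \<longlonglongrightarrow> exp (a + b)"
proof -
  define c where "c = norm a + norm b"
  define K where "K = exp c * c^2 * (3 * exp c + 1 + c * exp c + exp c * exp c)"
  have "((\<lambda>n. (exp (a /\<^sub>R real n) * exp (b /\<^sub>R real n))^n - exp (a + b)) \<longlongrightarrow> 0) sequentially"
  proof (rule Lim_null_comparison)
    show "\<forall>\<^sub>F n in sequentially. norm ((exp (a /\<^sub>R real n) * exp (b /\<^sub>R real n))^n - exp (a + b)) \<le> K / real n"
      unfolding eventually_sequentially K_def c_def using trotter_bound by blast
    show "(\<lambda>n. K / real n) \<longlonglongrightarrow> 0" by (rule lim_const_over_n)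
  qed
  then show ?thesis by (rule LIM_zero_cancel)
qed




lemma mrep_mabs [simp]: "mrep (mabs A) = A"
  by (simp add: mabs_inverse)

lemma mabs_eq_iff: "mabs A = x \<longleftrightarrow> A = mrep x"
  by (metis mrep_mabs mrep_inverse)

lemma mabs_mult: "mabs (A ** B) = mabs A * mabs B"
  by (metis mrep_mabs mrep_mult mrep_inject_iff)
lemma mabs_add: "mabs (A + B) = mabs A + mabs B"
  by (metis mrep_mabs mrep_add mrep_inject_iff)
lemma mabs_diff: "mabs (A - B) = mabs A - mabs B"
  by (metis mrep_mabs mrep_diff mrep_inject_iff)
lemma mabs_uminus: "mabs (- A) = - mabs A"
  by (metis mrep_mabs mrep_uminus mrep_inject_iff)
lemma mabs_scaleR: "mabs (c *\<^sub>R A) = c *\<^sub>R mabs A"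
  by (metis mrep_mabs mrep_scaleR mrep_inject_iff)
lemma mabs_zero: "mabs 0 = 0"
  by (metis mrep_mabs mrep_zero mrep_inject_iff)
lemma mabs_one: "mabs (mat 1) = 1"
  by (metis mrep_mabs mrep_one mrep_inject_iff)

lemmas mabs_simps = mabs_mult mabs_add mabs_diff mabs_uminus mabs_scaleR mabs_zero mabs_one

lemma mpow_eq: "mpow A k = mrep (mabs A ^ k)"
  by (induction k) simp_all

lemma mexp_eq: "mexp A = mrep (exp (mabs A))"
proof -
  have "(\<lambda>k. mabs A ^ k /\<^sub>R fact k) sums exp (mabs A)" by (rule exp_converges)
  then have "(\<lambda>k. mrep (mabs A ^ k /\<^sub>R fact k)) sums mrep (exp (mabs A))"
    by (rule bounded_linear.sums[OF bounded_linear_mrep])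
  then have "(\<lambda>k. (1 / fact k) *\<^sub>R mpow A k) sums mrep (exp (mabs A))"
    by (simp add: mpow_eq divide_inverse_commute)
  then show ?thesis unfolding mexp_def by (rule sums_unique[symmetric])
qed

lemma mexp_mabs: "mabs (mexp A) = exp (mabs A)"
  by (simp add: mexp_eq mrep_inverse)

lemma mexp_zero [simp]: "mexp 0 = mat 1"
  by (simp add: mexp_eq mabs_zero)

lemma mexp_add:
  assumes "A ** B = B ** A"
  shows "mexp (A + B) = mexp A ** mexp B"
proof -
  have "mabs A * mabs B = mabs B * mabs A" using assms by (simp flip: mabs_mult)
  then show ?thesis by (simp add: mexp_eq mabs_add exp_add_commuting)
qed

lemma mexp_minus_right: "mexp A ** mexp (- A) = mat 1"
  by (simp add: mexp_eq mabs_uminus exp_minus_inverse flip: mrep_mult)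

lemma mexp_minus_left: "mexp (- A) ** mexp A = mat 1"
  using mexp_minus_right[of "- A"] by simp

lemma matrix_inv_eq:
  fixes A B :: "'n::finite cmat"
  assumes "A ** B = mat 1"
  shows "matrix_inv A = B"
proof -
  have BA: "B ** A = mat 1" using assms matrix_left_right_inverse by blast
  have ex: "A ** matrix_inv A = mat 1 \<and> matrix_inv A ** A = mat 1"
    unfolding matrix_inv_def by (rule someI[of _ B]) (simp add: assms BA)
  then have "matrix_inv A = matrix_inv A ** (A ** B)" by (simp add: assms)
  also have "\<dots> = B" using ex by (simp add: matrix_mul_assoc)
  finally show ?thesis .
qed

lemma matrix_inv_mexp: "matrix_inv (mexp A) = mexp (- A)"
  by (rule matrix_inv_eq[OF mexp_minus_right])

lemma exp_conj_mm:
  fixes p q a :: "'n::finite mm"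
  assumes qp: "q * p = 1" and pq: "p * q = 1"
  shows "exp (p * a * q) = p * exp a * q"
proof -
  have pw: "(p * a * q)^n = p * a^n * q" for n
  proof (induction n)
    case 0 then show ?case by (simp add: pq)
  next
    case (Suc n)
    have "(p * a * q)^Suc n = (p * a * q) * (p * a^n * q)" using Suc.IH by simp
    also have "\<dots> = p * a * (q * p) * a^n * q" by (simp add: mult.assoc)
    also have "\<dots> = p * a^Suc n * q" by (simp add: qp mult.assoc)
    finally show ?case .
  qed
  have "(\<lambda>n. p * (a^n /\<^sub>R fact n) * q) sums (p * exp a * q)"
    by (intro sums_mult sums_mult2 exp_converges)
  then have "(\<lambda>n. (p * a * q)^n /\<^sub>R fact n) sums (p * exp a * q)"
    by (simp add: pw)
  then show ?thesis using exp_converges sums_unique2 by blast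
qed

lemma mexp_conj:
  fixes P Q A :: "'n::finite cmat"
  assumes "Q ** P = mat 1"
  shows "mexp (P ** A ** Q) = P ** mexp A ** Q"
proof -
  have "P ** Q = mat 1" using assms matrix_left_right_inverse by blast
  then have "mabs Q * mabs P = 1" "mabs P * mabs Q = 1" using assms by (simp_all flip: mabs_mult add: mabs_one)
  then show ?thesis by (simp add: mexp_eq mabs_mult exp_conj_mm)
qed


lemma adj_adj [simp]: "adj (adj A) = A"
  by (simp add: adj_def vec_eq_iff)

lemma adj_mult: "adj (A ** B) = adj B ** adj A"
  by (simp add: adj_def matrix_matrix_mult_def vec_eq_iff mult.commute)

lemma adj_add: "adj (A + B) = adj A + adj B"
  by (simp add: adj_def vec_eq_iff)

lemma adj_diff: "adj (A - B) = adj A - adj B"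
  by (simp add: adj_def vec_eq_iff)

lemma adj_uminus: "adj (- A) = - adj A"
  by (simp add: adj_def vec_eq_iff)

lemma adj_scaleR: "adj (c *\<^sub>R A) = c *\<^sub>R adj A"
  by (simp add: adj_def vec_eq_iff)

lemma adj_zero [simp]: "adj 0 = 0"
  by (simp add: adj_def vec_eq_iff)

lemma adj_one [simp]: "adj (mat 1) = mat 1"
  by (simp add: adj_def vec_eq_iff mat_def)

lemma adj_cscale: "adj (cscale c A) = cscale (cnj c) (adj A)"
  by (simp add: adj_def cscale_def vec_eq_iff)

lemma bounded_linear_adj: "bounded_linear (adj :: 'n::finite cmat \<Rightarrow> 'n cmat)"
  by (rule bounded_linearI') (simp_all add: adj_add adj_scaleR)

lemma mpow_commute: "mpow A k ** A = A ** mpow A k"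
  by (metis mpow_eq mrep_mabs mrep_mult power_commutes)

lemma adj_mpow: "adj (mpow A k) = mpow (adj A) k"
proof (induction k)
  case 0 show ?case by simp
next
  case (Suc k)
  have "adj (mpow A (Suc k)) = mpow (adj A) k ** adj A" by (simp add: adj_mult Suc)
  also have "\<dots> = mpow (adj A) (Suc k)"
    by (simp add: mpow_commute)
  finally show ?case .
qed

lemma mexp_sums: "(\<lambda>k. (1 / fact k) *\<^sub>R mpow A k) sums mexp A"
proof -
  have "(\<lambda>k. mabs A ^ k /\<^sub>R fact k) sums exp (mabs A)" by (rule exp_converges)
  then have "(\<lambda>k. mrep (mabs A ^ k /\<^sub>R fact k)) sums mrep (exp (mabs A))"
    by (rule bounded_linear.sums[OF bounded_linear_mrep])
  then show ?thesis by (simp add: mpow_eq divide_inverse_commute mexp_eq)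
qed

lemma adj_mexp: "adj (mexp A) = mexp (adj A)"
proof -
  have "(\<lambda>k. adj ((1 / fact k) *\<^sub>R mpow A k)) sums adj (mexp A)"
    by (rule bounded_linear.sums[OF bounded_linear_adj mexp_sums])
  then have "(\<lambda>k. (1 / fact k) *\<^sub>R mpow (adj A) k) sums adj (mexp A)"
    by (simp add: adj_scaleR adj_mpow)
  then show ?thesis using mexp_sums sums_unique2 by blast
qed

lemma mexp_vd_right:
  "((\<lambda>t. mexp (t *\<^sub>R A)) has_vector_derivative (mexp (t *\<^sub>R A) ** A)) (at t)"
proof -
  have "((\<lambda>t. exp (t *\<^sub>R mabs A)) has_vector_derivative exp (t *\<^sub>R mabs A) * mabs A) (at t)"
    by (rule exp_scaleR_has_vector_derivative_right)
  from bounded_linear.has_vector_derivative[OF bounded_linear_mrep this]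
  show ?thesis by (simp add: mexp_eq mabs_scaleR)
qed

lemma mexp_vd_left:
  "((\<lambda>t. mexp (t *\<^sub>R A)) has_vector_derivative (A ** mexp (t *\<^sub>R A))) (at t)"
proof -
  have "((\<lambda>t. exp (t *\<^sub>R mabs A)) has_vector_derivative mabs A * exp (t *\<^sub>R mabs A)) (at t)"
    by (rule exp_scaleR_has_vector_derivative_left)
  from bounded_linear.has_vector_derivative[OF bounded_linear_mrep this]
  show ?thesis by (simp add: mexp_eq mabs_scaleR)
qed

lemma mexp_has_derivative:
  "(mexp has_derivative (\<lambda>h. mrep (Dexp (mabs s) (mabs h)))) (at s)"
proof -
  have "(mabs has_derivative mabs) (at s)"
    by (rule bounded_linear_imp_has_derivative[OF bounded_linear_mabs])
  moreover have "(exp has_derivative Dexp (mabs s)) (at (mabs s))"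
    by (rule exp_has_derivative_mm)
  ultimately have "((exp \<circ> mabs) has_derivative (Dexp (mabs s) \<circ> mabs)) (at s)"
    by (rule diff_chain_at)
  from bounded_linear.has_derivative[OF bounded_linear_mrep this]
  show ?thesis by (simp add: mexp_eq[abs_def] o_def)
qed

lemma frechet_mexp:
  fixes s lam k :: "'n::finite cmat"
  assumes "lam ** s = s ** lam"
  shows "frechet_derivative mexp (at s) (lam + brk k s) = lam ** mexp s + (k ** mexp s - mexp s ** k)"
proof -
  have fd: "frechet_derivative mexp (at s) = (\<lambda>h. mrep (Dexp (mabs s) (mabs h)))"
    by (rule frechet_derivative_at[OF mexp_has_derivative, symmetric])
  have c: "mabs lam * mabs s = mabs s * mabs lam" using assms by (simp flip: mabs_mult)
  have "Dexp (mabs s) (mabs lam + (mabs k * mabs s - mabs s * mabs k))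
        = Dexp (mabs s) (mabs lam) + Dexp (mabs s) (mabs k * mabs s - mabs s * mabs k)"
    by (rule linear_add[OF bounded_linear.linear[OF Dexp_linear]])
  also have "\<dots> = mabs lam * exp (mabs s) + (mabs k * exp (mabs s) - exp (mabs s) * mabs k)"
    by (simp add: Dexp_commuting[OF c] Dexp_bracket)
  finally show ?thesis
    by (simp add: fd brk_def mabs_simps mexp_eq)
qed

definition adc :: "'n::finite cmat \<Rightarrow> 'n cmat \<Rightarrow> 'n cmat" where
  "adc A X = A ** X - X ** A"

lemma adc_pow_eq: "(adc A ^^ n) K = mrep ((ad (mabs A) ^^ n) (mabs K))"
  by (induction n) (simp_all add: adc_def ad_def)

lemma Ad_sums:
  "(\<lambda>n. (1 / fact n) *\<^sub>R (adc A ^^ n) K) sums (mexp A ** K ** mexp (- A))"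
proof -
  have "summable (\<lambda>n. (ad (mabs A) ^^ n) (mabs K) /\<^sub>R fact n)"
    by (rule summable_norm_cancel[OF summable_ad_series])
  then have "(\<lambda>n. (ad (mabs A) ^^ n) (mabs K) /\<^sub>R fact n) sums (exp (mabs A) * mabs K * exp (- mabs A))"
    unfolding exp_Ad_series by (rule summable_sums)
  from bounded_linear.sums[OF bounded_linear_mrep this]
  have *: "(\<lambda>n. mrep ((ad (mabs A) ^^ n) (mabs K) /\<^sub>R fact n)) sums mrep (exp (mabs A) * mabs K * exp (- mabs A))" .
  have f: "(\<lambda>n. mrep ((ad (mabs A) ^^ n) (mabs K) /\<^sub>R fact n)) = (\<lambda>n. (1 / fact n) *\<^sub>R (adc A ^^ n) K)"
    by (simp add: adc_pow_eq inverse_eq_divide)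
  have v: "mrep (exp (mabs A) * mabs K * exp (- mabs A)) = mexp A ** K ** mexp (- A)"
    by (simp only: mrep_mult mexp_eq mabs_uminus mrep_mabs)
  show ?thesis using * unfolding f v .
qed

lemma trotter_cmat:
  "(\<lambda>n. mpow (mexp ((1 / real n) *\<^sub>R A) ** mexp ((1 / real n) *\<^sub>R B)) n) \<longlonglongrightarrow> mexp (A + B)"
proof -
  have "(\<lambda>n. (exp (mabs A /\<^sub>R real n) * exp (mabs B /\<^sub>R real n))^n) \<longlonglongrightarrow> exp (mabs A + mabs B)"
    by (rule trotter)
  from bounded_linear.tendsto[OF bounded_linear_mrep this]
  have *: "(\<lambda>n. mrep ((exp (mabs A /\<^sub>R real n) * exp (mabs B /\<^sub>R real n))^n)) \<longlonglongrightarrow> mrep (exp (mabs A + mabs B))" .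
  have f: "(\<lambda>n. mrep ((exp (mabs A /\<^sub>R real n) * exp (mabs B /\<^sub>R real n))^n))
      = (\<lambda>n. mpow (mexp ((1 / real n) *\<^sub>R A) ** mexp ((1 / real n) *\<^sub>R B)) n)"
  proof
    fix n
    have "mabs (mexp ((1 / real n) *\<^sub>R A) ** mexp ((1 / real n) *\<^sub>R B))
          = exp (mabs A /\<^sub>R real n) * exp (mabs B /\<^sub>R real n)"
      by (simp add: mabs_mult mexp_mabs mabs_scaleR inverse_eq_divide)
    then show "mrep ((exp (mabs A /\<^sub>R real n) * exp (mabs B /\<^sub>R real n))^n)
      = mpow (mexp ((1 / real n) *\<^sub>R A) ** mexp ((1 / real n) *\<^sub>R B)) n"
      by (simp add: mpow_eq)
  qed
  have v: "mrep (exp (mabs A + mabs B)) = mexp (A + B)"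
    by (simp add: mexp_eq mabs_add)
  show ?thesis using * unfolding f v .
qed




section \<open>The maximal compact subgroup and its Lie algebra\<close>

lemma vd_quot:
  fixes f :: "real \<Rightarrow> 'a::real_normed_vector"
  assumes "(f has_vector_derivative f') (at x)"
  shows "((\<lambda>y. (f y - f x) /\<^sub>R (y - x)) \<longlongrightarrow> f') (at x)"
proof -
  from assms have T: "((\<lambda>y. norm ((f y - f x) - (y - x) *\<^sub>R f') / norm (y - x)) \<longlongrightarrow> 0) (at x)"
    unfolding has_vector_derivative_def has_derivative_iff_norm by simp
  have E: "\<forall>\<^sub>F y in at x. norm ((f y - f x) - (y - x) *\<^sub>R f') / norm (y - x)
                    = norm ((f y - f x) /\<^sub>R (y - x) - f')"
  proof -
    have "eventually (\<lambda>y. y \<noteq> x) (at x)" by (simp add: eventually_at_filter)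
    then show ?thesis
    proof (rule eventually_mono)
      fix y assume "y \<noteq> x"
      then have "(f y - f x) /\<^sub>R (y - x) - f' = (1 / (y - x)) *\<^sub>R ((f y - f x) - (y - x) *\<^sub>R f')"
        by (simp add: scaleR_diff_right inverse_eq_divide)
      then show "norm ((f y - f x) - (y - x) *\<^sub>R f') / norm (y - x) = norm ((f y - f x) /\<^sub>R (y - x) - f')"
        by (simp add: divide_inverse_commute)
    qed
  qed
  have "((\<lambda>y. norm ((f y - f x) /\<^sub>R (y - x) - f')) \<longlongrightarrow> 0) (at x)"
    using tendsto_cong[OF E] T by blast
  then have "((\<lambda>y. (f y - f x) /\<^sub>R (y - x) - f') \<longlongrightarrow> 0) (at x)"
    by (simp add: tendsto_norm_zero_iff)
  then show ?thesis by (rule LIM_zero_cancel)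
qed

context
  fixes G :: "'n::finite cmat set"
  assumes G: "complex_reductive G"
begin

lemma G_one: "mat 1 \<in> G" and G_mult: "A \<in> G \<Longrightarrow> B \<in> G \<Longrightarrow> A ** B \<in> G"
  and G_inv: "A \<in> G \<Longrightarrow> matrix_inv A \<in> G" and G_adj: "A \<in> G \<Longrightarrow> adj A \<in> G"
  using G unfolding complex_reductive_def algebraic_subgroup_def by auto

lemma maxK_iff: "g \<in> maxK G \<longleftrightarrow> g \<in> G \<and> g ** adj g = mat 1"
  by (simp add: maxK_def)

lemma maxK_one: "mat 1 \<in> maxK G"
  by (simp add: maxK_iff G_one)

lemma maxK_mult:
  assumes "g \<in> maxK G" "h \<in> maxK G" shows "g ** h \<in> maxK G"
proof -
  have "g ** h ** adj (g ** h) = g ** (h ** adj h) ** adj g"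
    by (simp add: adj_mult matrix_mul_assoc)
  then show ?thesis using assms by (simp add: maxK_iff G_mult)
qed

lemma maxK_adj:
  assumes "g \<in> maxK G" shows "adj g \<in> maxK G" "matrix_inv g = adj g" "adj g ** g = mat 1"
proof -
  have gg: "g ** adj g = mat 1" using assms by (simp add: maxK_iff)
  then show ag: "adj g ** g = mat 1" using matrix_left_right_inverse by blast
  show "adj g \<in> maxK G" using assms ag by (simp add: maxK_iff G_adj)
  show "matrix_inv g = adj g" by (rule matrix_inv_eq[OF gg])
qed

lemma maxK_mpow: "g \<in> maxK G \<Longrightarrow> mpow g n \<in> maxK G"
  by (induction n) (simp_all add: maxK_one maxK_mult)

lemma polyfun_tendsto:
  fixes p :: "'n cmat \<Rightarrow> complex"
  assumes "p \<in> polyfun" "X \<longlonglongrightarrow> L"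
  shows "(\<lambda>k. p (X k)) \<longlonglongrightarrow> p L"
  using assms(1)
proof induction
  case (pconst c) show ?case by simp
next
  case (pcoord i j) show ?case by (intro tendsto_vec_nth assms(2))
next
  case (padd p q) then show ?case by (intro tendsto_add)
next
  case (pmult p q) then show ?case by (intro tendsto_mult)
qed

lemma maxK_limit:
  assumes X: "\<And>k. X k \<in> maxK G" and L: "X \<longlonglongrightarrow> L"
  shows "L \<in> maxK G"
proof -
  obtain P where P: "P \<subseteq> polyfun" "G = {A. invertible A \<and> (\<forall>p\<in>P. p A = 0)}"
    using G unfolding complex_reductive_def algebraic_subgroup_def by blast
  have "(\<lambda>k. mabs (X k) * mabs (adj (X k))) \<longlonglongrightarrow> mabs L * mabs (adj L)"
    by (intro tendsto_mult bounded_linear.tendsto[OF bounded_linear_mabs]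
          bounded_linear.tendsto[OF bounded_linear_adj] L)
  from bounded_linear.tendsto[OF bounded_linear_mrep this]
  have "(\<lambda>k. X k ** adj (X k)) \<longlonglongrightarrow> L ** adj L" by simp
  moreover have "(\<lambda>k. X k ** adj (X k)) = (\<lambda>k. mat 1)" using X by (simp add: maxK_iff)
  ultimately have LL: "L ** adj L = mat 1" using LIMSEQ_unique tendsto_const by metis
  then have "invertible L" unfolding invertible_def using matrix_left_right_inverse by blast
  moreover have "p L = 0" if "p \<in> P" for p
  proof -
    have "(\<lambda>k. p (X k)) \<longlonglongrightarrow> p L" using P(1) that L by (intro polyfun_tendsto) auto
    moreover have "(\<lambda>k. p (X k)) = (\<lambda>k. 0)"
    proof
      fix k
      have "X k \<in> G" using X[of k] by (simp add: maxK_iff)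
      then show "p (X k) = 0" using that P(2) by blast
    qed
    ultimately show ?thesis using LIMSEQ_unique tendsto_const by metis
  qed
  ultimately have "L \<in> G" using P(2) by blast
  then show ?thesis using LL by (simp add: maxK_iff)
qed

lemma kk_iff: "X \<in> kk G \<longleftrightarrow> (\<forall>t::real. mexp (t *\<^sub>R X) \<in> maxK G)"
  by (simp add: kk_def lie_alg_def)

lemma kk_zero: "0 \<in> kk G"
  by (simp add: kk_iff maxK_one)

lemma kk_scale: "X \<in> kk G \<Longrightarrow> c *\<^sub>R X \<in> kk G"
  by (simp add: kk_iff)

lemma kk_mexp: "X \<in> kk G \<Longrightarrow> mexp X \<in> maxK G"
  using kk_iff[of X] by (metis scaleR_one)

lemma kk_add:
  assumes X: "X \<in> kk G" and Y: "Y \<in> kk G"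
  shows "X + Y \<in> kk G"
  unfolding kk_iff
proof
  fix t :: real
  have "(\<lambda>n. mpow (mexp ((1 / real n) *\<^sub>R (t *\<^sub>R X)) ** mexp ((1 / real n) *\<^sub>R (t *\<^sub>R Y))) n)
        \<longlonglongrightarrow> mexp (t *\<^sub>R X + t *\<^sub>R Y)"
    by (rule trotter_cmat)
  moreover have "mpow (mexp ((1 / real n) *\<^sub>R (t *\<^sub>R X)) ** mexp ((1 / real n) *\<^sub>R (t *\<^sub>R Y))) n \<in> maxK G" for n
    using X Y by (intro maxK_mpow maxK_mult kk_mexp kk_scale)
  ultimately have "mexp (t *\<^sub>R X + t *\<^sub>R Y) \<in> maxK G" by (rule maxK_limit[rotated])
  then show "mexp (t *\<^sub>R (X + Y)) \<in> maxK G" by (simp add: scaleR_add_right)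
qed

lemma subspace_kk: "subspace (kk G)"
  by (rule subspaceI) (simp_all add: kk_zero kk_add kk_scale)

lemma closed_kk: "closed (kk G)"
  by (rule closed_subspace[OF subspace_kk])

lemma kk_diff: "X \<in> kk G \<Longrightarrow> Y \<in> kk G \<Longrightarrow> X - Y \<in> kk G"
  using subspace_diff[OF subspace_kk] by blast

lemma kk_uminus: "X \<in> kk G \<Longrightarrow> - X \<in> kk G"
  using subspace_neg[OF subspace_kk] by blast

lemma kk_skew:
  assumes X: "X \<in> kk G" shows "adj X = - X"
proof -
  have eq: "mexp (t *\<^sub>R adj X) = mexp (t *\<^sub>R (- X))" for t
  proof -
    have "mexp (t *\<^sub>R X) \<in> maxK G" using X by (simp add: kk_iff)
    then have "adj (mexp (t *\<^sub>R X)) = matrix_inv (mexp (t *\<^sub>R X))" using maxK_adj by simp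
    then show ?thesis by (simp add: adj_mexp adj_scaleR matrix_inv_mexp)
  qed
  have "((\<lambda>t. mexp (t *\<^sub>R adj X)) has_vector_derivative (mexp (0 *\<^sub>R adj X) ** adj X)) (at 0)"
    by (rule mexp_vd_right)
  moreover have "((\<lambda>t. mexp (t *\<^sub>R adj X)) has_vector_derivative (mexp (0 *\<^sub>R (- X)) ** (- X))) (at 0)"
    using mexp_vd_right[of "- X" 0] by (simp add: eq)
  ultimately show ?thesis using vector_derivative_unique_at by fastforce
qed

lemma kk_Ad:
  assumes g: "g \<in> maxK G" and Y: "Y \<in> kk G"
  shows "g ** Y ** adj g \<in> kk G"
  unfolding kk_iff
proof
  fix t :: real
  have "mexp (t *\<^sub>R (g ** Y ** adj g)) = mexp (g ** (t *\<^sub>R Y) ** adj g)"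
    by (simp add: scalar_matrix_assoc matrix_scalar_ac)
  also have "\<dots> = g ** mexp (t *\<^sub>R Y) ** adj g"
    by (rule mexp_conj[OF maxK_adj(3)[OF g]])
  also have "\<dots> \<in> maxK G"
    using g Y by (intro maxK_mult maxK_adj(1)) (simp_all add: kk_iff)
  finally show "mexp (t *\<^sub>R (g ** Y ** adj g)) \<in> maxK G" .
qed

lemma mexp_minus_adj:
  assumes X: "X \<in> kk G" shows "adj (mexp (t *\<^sub>R X)) = mexp (t *\<^sub>R (- X))"
  using kk_skew[OF X] by (simp add: adj_mexp adj_scaleR)

lemma conj_vd:
  fixes X Y :: "'n cmat"
  shows "((\<lambda>t. mexp (t *\<^sub>R X) ** Y ** mexp (t *\<^sub>R (- X))) has_vector_derivative (X ** Y - Y ** X)) (at 0)"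
proof -
  define a where "a = mabs X"
  define y where "y = mabs Y"
  have d1: "((\<lambda>t. exp (t *\<^sub>R a) * y) has_vector_derivative (exp (0 *\<^sub>R a) * 0 + exp (0 *\<^sub>R a) * a * y)) (at 0)"
    by (intro has_vector_derivative_mult exp_scaleR_has_vector_derivative_right has_vector_derivative_const)
  have d2: "((\<lambda>t. exp (t *\<^sub>R a) * y * exp (t *\<^sub>R (- a))) has_vector_derivative
        (exp (0 *\<^sub>R a) * y * (exp (0 *\<^sub>R (- a)) * (- a)) + (exp (0 *\<^sub>R a) * 0 + exp (0 *\<^sub>R a) * a * y) * exp (0 *\<^sub>R (- a)))) (at 0)"
    by (intro has_vector_derivative_mult d1 exp_scaleR_has_vector_derivative_right)
  have "((\<lambda>t. mrep (exp (t *\<^sub>R a) * y * exp (t *\<^sub>R (- a)))) has_vector_derivative mrep (a * y - y * a)) (at 0)"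
    using bounded_linear.has_vector_derivative[OF bounded_linear_mrep d2] by simp
  moreover have "(\<lambda>t. mrep (exp (t *\<^sub>R a) * y * exp (t *\<^sub>R (- a)))) = (\<lambda>t. mexp (t *\<^sub>R X) ** Y ** mexp (t *\<^sub>R (- X)))"
    by (simp add: a_def y_def mexp_eq mabs_scaleR mabs_uminus)
  moreover have "mrep (a * y - y * a) = X ** Y - Y ** X" by (simp add: a_def y_def)
  ultimately show ?thesis by simp
qed

lemma kk_bracket:
  assumes X: "X \<in> kk G" and Y: "Y \<in> kk G"
  shows "brk X Y \<in> kk G"
proof -
  define c where "c t = mexp (t *\<^sub>R X) ** Y ** mexp (t *\<^sub>R (- X))" for t
  have cin: "c t \<in> kk G" for t
  proof -
    have g: "mexp (t *\<^sub>R X) \<in> maxK G" using X by (simp add: kk_iff)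
    show ?thesis using kk_Ad[OF g Y] by (simp add: c_def mexp_minus_adj[OF X])
  qed
  have c0: "c 0 = Y" by (simp add: c_def)
  have lim: "((\<lambda>t. (c t - c 0) /\<^sub>R (t - 0)) \<longlongrightarrow> X ** Y - Y ** X) (at 0)"
    unfolding c_def by (rule vd_quot[OF conj_vd[of X Y]])
  have ev: "\<forall>\<^sub>F t in at (0::real). (c t - c 0) /\<^sub>R (t - 0) \<in> kk G"
    by (rule always_eventually) (intro allI kk_scale kk_diff cin)
  have "X ** Y - Y ** X \<in> kk G"
    by (rule Lim_in_closed_set[OF closed_kk ev at_neq_bot lim])
  then show ?thesis by (simp add: brk_def)
qed

end




section \<open>Complex scaling, i k, projections\<close>

lemma cscale_mult_left: "cscale c (A ** B) = cscale c A ** B"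
  by (simp add: cscale_def matrix_matrix_mult_def vec_eq_iff sum_distrib_left mult.assoc)

lemma cscale_mult_right: "cscale c (A ** B) = A ** cscale c B"
  by (simp add: cscale_def matrix_matrix_mult_def vec_eq_iff sum_distrib_left mult_ac)

lemma cscale_out_left: "cscale c A ** B = cscale c (A ** B)"
  by (simp add: cscale_mult_left)

lemma cscale_out_right: "A ** cscale c B = cscale c (A ** B)"
  by (simp add: cscale_mult_right)

lemma cscale_cscale: "cscale c (cscale d A) = cscale (c * d) A"
  by (simp add: cscale_def vec_eq_iff mult.assoc)

lemma cscale_one [simp]: "cscale 1 A = A"
  by (simp add: cscale_def vec_eq_iff)

lemma cscale_add: "cscale c (A + B) = cscale c A + cscale c B"
  by (simp add: cscale_def vec_eq_iff algebra_simps)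

lemma cscale_diff: "cscale c (A - B) = cscale c A - cscale c B"
  by (simp add: cscale_def vec_eq_iff algebra_simps)

lemma cscale_uminus: "cscale c (- A) = - cscale c A"
  by (simp add: cscale_def vec_eq_iff algebra_simps)

lemma cscale_scaleR: "cscale c (r *\<^sub>R A) = r *\<^sub>R cscale c A"
  by (simp add: cscale_def vec_eq_iff scaleR_conv_of_real mult_ac)

lemma cscale_zero [simp]: "cscale c 0 = 0"
  by (simp add: cscale_def vec_eq_iff)

lemma cscale_minus_one: "cscale (-1) A = - A"
  by (simp add: cscale_def vec_eq_iff)

lemma cscale_ii: "cscale \<i> (cscale \<i> A) = - A"
  by (simp add: cscale_cscale cscale_minus_one)

lemma cscale_ii': "cscale (- \<i>) (cscale \<i> A) = A"
  by (simp add: cscale_cscale)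

lemma cscale_ii'': "cscale \<i> (cscale (- \<i>) A) = A"
  by (simp add: cscale_cscale)

lemma brk_cscale_left: "brk (cscale c A) B = cscale c (brk A B)"
  by (simp add: brk_def cscale_diff cscale_out_left cscale_out_right)

lemma brk_cscale_right: "brk A (cscale c B) = cscale c (brk A B)"
  by (simp add: brk_def cscale_diff cscale_out_left cscale_out_right)

lemma brk_antisym: "brk A B = - brk B A"
  by (simp add: brk_def)

lemma linear_cscale: "linear (cscale c :: 'n::finite cmat \<Rightarrow> 'n cmat)"
  by (rule linearI) (simp_all add: cscale_add cscale_scaleR)

lemma proj_exists:
  fixes V :: "'a::euclidean_space set"
  assumes V: "subspace V"
  shows "\<exists>P. linear P \<and> (\<forall>x. P x \<in> V) \<and> (\<forall>x\<in>V. P x = x)"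
proof -
  obtain B where B: "B \<subseteq> V" "independent B" "V \<subseteq> span B"
    by (rule maximal_independent_subset)
  obtain C where C: "B \<subseteq> C" "C \<subseteq> UNIV" "independent C" "UNIV \<subseteq> span C"
    by (rule maximal_independent_subset_extend[OF subset_UNIV B(2)])
  from linear_independent_extend[OF C(3), of "\<lambda>x. if x \<in> B then x else 0"]
  obtain g where g: "linear g" "\<forall>x\<in>C. g x = (if x \<in> B then x else 0)"
    by (elim exE conjE)
  have gB: "g x = id x" if "x \<in> B" for x
    using g(2) C(1) that by auto
  have "g x = x" if "x \<in> V" for x
  proof -
    have xB: "x \<in> span B" using B(3) that by (rule subsetD)
    have "g x = id x" by (rule linear_eq_on_span[OF g(1) linear_id gB xB])
    then show ?thesis by simp
  qed
  moreover have "g x \<in> V" for x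
  proof -
    have xC: "x \<in> span C" using C(4) by (rule subsetD) simp
    have sub: "subspace {x. g x \<in> V}"
      using linear_subspace_vimage[OF g(1) V] by (simp add: vimage_def)
    have gC: "g y \<in> V" if "y \<in> C" for y
    proof (cases "y \<in> B")
      case True then show ?thesis using g(2) that B(1) by auto
    next
      case False then show ?thesis using g(2) that subspace_0[OF V] by auto
    qed
    show ?thesis using span_induct[OF xC sub] gC by blast
  qed
  ultimately show ?thesis using g(1) by blast
qed

lemma bilinear_ext:
  fixes V :: "'n::finite cmat set" and ip :: "'n cmat \<Rightarrow> 'n cmat \<Rightarrow> real"
  assumes V: "subspace V" and ip: "euclid_ip_on V ip"
  shows "\<exists>L. bounded_bilinear L \<and> (\<forall>x\<in>V. \<forall>y\<in>V. L x y = ip x y)"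
proof -
  obtain P where P: "linear P" "\<And>x. P x \<in> V" "\<And>x. x \<in> V \<Longrightarrow> P x = x"
    using proj_exists[OF V] by blast
  have sym: "\<And>x y. x \<in> V \<Longrightarrow> y \<in> V \<Longrightarrow> ip x y = ip y x"
    and add: "\<And>x y z. x \<in> V \<Longrightarrow> y \<in> V \<Longrightarrow> z \<in> V \<Longrightarrow> ip (x + y) z = ip x z + ip y z"
    and scl: "\<And>x y c. x \<in> V \<Longrightarrow> y \<in> V \<Longrightarrow> ip (c *\<^sub>R x) y = c * ip x y"
    using ip unfolding euclid_ip_on_def by blast+
  define L where "L x y = ip (P x) (P y)" for x y
  have "bilinear L"
    unfolding bilinear_def
  proof (intro conjI allI)
    fix y
    show "linear (\<lambda>x. L x y)"
      by (rule linearI) (simp_all add: L_def linear_add[OF P(1)] linear_scale[OF P(1)] add scl P(2))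
  next
    fix x
    show "linear (\<lambda>y. L x y)"
    proof (rule linearI)
      fix y z
      show "L x (y + z) = L x y + L x z"
        unfolding L_def linear_add[OF P(1)]
        by (subst (1 2 3) sym) (simp_all add: P(2) add subspace_add[OF V])
    next
      fix c y
      show "L x (c *\<^sub>R y) = c *\<^sub>R L x y"
        unfolding L_def linear_scale[OF P(1)]
        by (subst (1 2) sym) (simp_all add: P(2) scl subspace_scale[OF V])
    qed
  qed
  then have "bounded_bilinear L" by (simp add: bilinear_conv_bounded_bilinear)
  moreover have "\<forall>x\<in>V. \<forall>y\<in>V. L x y = ip x y" by (simp add: L_def P(3))
  ultimately show ?thesis by blast
qed

context
  fixes G :: "'n::finite cmat set"
  assumes G: "complex_reductive G"
begin

lemma ik_iff: "x \<in> ik G \<longleftrightarrow> cscale (- \<i>) x \<in> kk G"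
proof
  assume "x \<in> ik G"
  then obtain X where "X \<in> kk G" "x = cscale \<i> X" by (auto simp: ik_def)
  then show "cscale (- \<i>) x \<in> kk G" by (simp add: cscale_ii')
next
  assume "cscale (- \<i>) x \<in> kk G"
  then show "x \<in> ik G" unfolding ik_def using cscale_ii''[of x] by (metis image_eqI)
qed

lemma ik_of_kk: "X \<in> kk G \<Longrightarrow> cscale \<i> X \<in> ik G"
  by (simp add: ik_def)

lemma kk_of_ik: "x \<in> ik G \<Longrightarrow> cscale \<i> x \<in> kk G"
  using kk_uminus[OF G] by (auto simp: ik_def cscale_ii)

lemma subspace_ik: "subspace (ik G)"
  by (rule subspaceI)
     (simp_all add: ik_iff cscale_add cscale_scaleR kk_zero[OF G] kk_add[OF G] kk_scale[OF G])

lemma closed_ik: "closed (ik G)"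
  by (rule closed_subspace[OF subspace_ik])

lemma ik_herm: "x \<in> ik G \<Longrightarrow> adj x = x"
proof -
  assume "x \<in> ik G"
  then obtain X where X: "X \<in> kk G" "x = cscale \<i> X" by (auto simp: ik_def)
  then show "adj x = x" by (simp add: adj_cscale kk_skew[OF G X(1)] cscale_uminus flip: cscale_minus_one)
    (simp add: cscale_cscale)
qed

lemma kk_ik_zero: "x \<in> kk G \<Longrightarrow> x \<in> ik G \<Longrightarrow> x = 0"
proof -
  assume "x \<in> kk G" "x \<in> ik G"
  then have "x = - x" using kk_skew[OF G] ik_herm by metis
  then have "2 *\<^sub>R x = 0" by (metis add.right_inverse scaleR_2)
  then show "x = 0" by simp
qed

lemma p_k_eq:
  assumes u: "u \<in> kk G" and v: "v \<in> ik G"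
  shows "p_k G (u + v) = u"
  unfolding p_k_def
proof (rule the_equality)
  show "u \<in> kk G \<and> u + v - u \<in> ik G" using u v by simp
next
  fix u' assume "u' \<in> kk G \<and> u + v - u' \<in> ik G"
  then have a: "u - u' \<in> kk G" and b: "u - u' + v \<in> ik G" using u by (auto intro: kk_diff[OF G] simp: algebra_simps)
  have "u - u' = (u - u' + v) - v" by simp
  also have "\<dots> \<in> ik G" using b v subspace_diff[OF subspace_ik] by blast
  finally show "u' = u" using kk_ik_zero a by (metis eq_iff_diff_eq_0)
qed

lemma p_ik_eq:
  assumes u: "u \<in> kk G" and v: "v \<in> ik G"
  shows "p_ik G (u + v) = v"
  unfolding p_ik_def
proof (rule the_equality)
  show "v \<in> ik G \<and> u + v - v \<in> kk G" using u v by simp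
next
  fix v' assume "v' \<in> ik G \<and> u + v - v' \<in> kk G"
  then have a: "v - v' \<in> ik G" and b: "u + (v - v') \<in> kk G" using v
    by (auto intro: subspace_diff[OF subspace_ik] simp: algebra_simps)
  have "v - v' = (u + (v - v')) - u" by simp
  also have "\<dots> \<in> kk G" using b u kk_diff[OF G] by blast
  finally show "v' = v" using kk_ik_zero a by (metis eq_iff_diff_eq_0)
qed

lemma brk_kk_ik: "X \<in> kk G \<Longrightarrow> y \<in> ik G \<Longrightarrow> brk X y \<in> ik G"
proof -
  assume X: "X \<in> kk G" and y: "y \<in> ik G"
  then obtain Y where Y: "Y \<in> kk G" "y = cscale \<i> Y" by (auto simp: ik_def)
  then show "brk X y \<in> ik G" using kk_bracket[OF G X Y(1)] by (simp add: brk_cscale_right ik_of_kk)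
qed

lemma brk_ik_kk: "y \<in> ik G \<Longrightarrow> X \<in> kk G \<Longrightarrow> brk y X \<in> ik G"
  using brk_kk_ik subspace_neg[OF subspace_ik] brk_antisym by metis

lemma brk_ik_ik: "x \<in> ik G \<Longrightarrow> y \<in> ik G \<Longrightarrow> brk x y \<in> kk G"
proof -
  assume x: "x \<in> ik G" and y: "y \<in> ik G"
  then obtain X Y where XY: "X \<in> kk G" "x = cscale \<i> X" "Y \<in> kk G" "y = cscale \<i> Y" by (auto simp: ik_def)
  then show "brk x y \<in> kk G"
    using kk_bracket[OF G XY(1,3)] kk_uminus[OF G]
    by (simp add: brk_cscale_left brk_cscale_right cscale_ii)
qed

lemma maxK_ik: "g \<in> maxK G \<Longrightarrow> x \<in> ik G \<Longrightarrow> g ** x ** adj g \<in> ik G"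
proof -
  assume g: "g \<in> maxK G" and x: "x \<in> ik G"
  then obtain X where X: "X \<in> kk G" "x = cscale \<i> X" by (auto simp: ik_def)
  have "g ** x ** adj g = cscale \<i> (g ** X ** adj g)"
    by (simp add: X(2) cscale_out_left cscale_out_right)
  then show ?thesis using kk_Ad[OF G g X(1)] by (simp add: ik_of_kk)
qed

end




lemma adc_brk: "adc A X = brk A X"
  by (simp add: adc_def brk_def)

lemma matrix_sub_rdistrib': "((B - C) ** A) = (B ** A) - (C ** A)"
  for A B C :: "'n::finite cmat"
  by (metis add_diff_cancel matrix_add_rdistrib' diff_add_cancel)

lemma Ad_abs_summable:
  fixes A K :: "'n::finite cmat"
  shows "summable (\<lambda>n. norm ((1 / fact n) *\<^sub>R (adc A ^^ n) K))"
proof -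
  obtain c where c: "c > 0" "\<And>x::'n::finite mm. norm (mrep x) \<le> norm x * c"
    using bounded_linear.pos_bounded[OF bounded_linear_mrep] by blast
  have "summable (\<lambda>n. norm ((ad (mabs A) ^^ n) (mabs K) /\<^sub>R fact n) * c)"
    by (rule summable_mult2[OF summable_ad_series])
  then show ?thesis
  proof (rule summable_comparison_test'[where N=0])
    fix n :: nat
    have "(1 / fact n) *\<^sub>R (adc A ^^ n) K = mrep ((ad (mabs A) ^^ n) (mabs K) /\<^sub>R fact n)"
      by (simp add: adc_pow_eq inverse_eq_divide)
    then show "norm (norm ((1 / fact n) *\<^sub>R (adc A ^^ n) K)) \<le> norm ((ad (mabs A) ^^ n) (mabs K) /\<^sub>R fact n) * c"
      using c(2)[of "(ad (mabs A) ^^ n) (mabs K) /\<^sub>R fact n"] by (metis real_norm_def abs_norm_cancel)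
  qed
qed

lemma sums_in_closed_subspace:
  fixes S :: "'a::euclidean_space set"
  assumes "subspace S" "f sums l" "\<And>n. f n \<in> S"
  shows "l \<in> S"
proof -
  have "(\<lambda>N. sum f {..<N}) \<longlonglongrightarrow> l" using assms(2) by (simp add: sums_def)
  moreover have "\<forall>\<^sub>F N in sequentially. sum f {..<N} \<in> S"
    using assms(1,3) by (intro always_eventually allI subspace_sum) auto
  ultimately show ?thesis
    using Lim_in_closed_set[OF closed_subspace[OF assms(1)]] by (metis trivial_limit_sequentially)
qed

lemma summable_if_abs:
  fixes f :: "nat \<Rightarrow> 'a::banach"
  assumes "summable (\<lambda>n. norm (f n))"
  shows "summable (\<lambda>n. if P n then f n else 0)"
  by (rule summable_comparison_test'[OF assms, where N=0]) simp




context
  fixes G :: "'n::finite cmat set"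
    and ip :: "'n cmat \<Rightarrow> 'n cmat \<Rightarrow> real"
    and s sd lam k :: "'n cmat"
  assumes G: "complex_reductive G"
    and ip: "euclid_ip_on (ik G) ip"
    and inv: "\<forall>g\<in>maxK G. \<forall>x\<in>ik G. \<forall>y\<in>ik G.
                ip (g ** x ** matrix_inv g) (g ** y ** matrix_inv g) = ip x y"
    and s: "s \<in> ik G" and sd: "sd \<in> ik G"
    and lam: "lam \<in> cscale \<i> ` zk G s"
    and k: "k \<in> zk_perp G ip s"
    and dec: "sd = lam + brk k s"
begin

definition L :: "'n cmat \<Rightarrow> 'n cmat \<Rightarrow> real" where
  "L = (SOME L. bounded_bilinear L \<and> (\<forall>x\<in>ik G. \<forall>y\<in>ik G. L x y = ip x y))"

lemma L_props: "bounded_bilinear L \<and> (\<forall>x\<in>ik G. \<forall>y\<in>ik G. L x y = ip x y)"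
  unfolding L_def by (rule someI_ex[OF bilinear_ext[OF subspace_ik[OF G] ip]])

lemma L_bb: "bounded_bilinear L" using L_props by blast

lemma L_ip: "x \<in> ik G \<Longrightarrow> y \<in> ik G \<Longrightarrow> L x y = ip x y" using L_props by blast

lemma L_sym: "x \<in> ik G \<Longrightarrow> y \<in> ik G \<Longrightarrow> L x y = L y x"
  using ip by (simp add: L_ip euclid_ip_on_def)

lemma L_pos: "x \<in> ik G \<Longrightarrow> 0 \<le> L x x"
proof -
  assume x: "x \<in> ik G"
  show "0 \<le> L x x"
  proof (cases "x = 0")
    case True then show ?thesis using bounded_bilinear.zero_left[OF L_bb] by simp
  next
    case False then show ?thesis using ip x by (simp add: L_ip euclid_ip_on_def less_imp_le)
  qed
qed

lemma L_def0: "x \<in> ik G \<Longrightarrow> L x x = 0 \<Longrightarrow> x = 0"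
proof (rule ccontr)
  assume x: "x \<in> ik G" and z: "L x x = 0" and nz: "x \<noteq> 0"
  have "ip x x > 0" using ip x nz by (simp add: euclid_ip_on_def)
  then show False using z L_ip[OF x x] by simp
qed

definition sgz :: "'n cmat" where "sgz = cscale (- \<i>) s"

lemma sgz_kk: "sgz \<in> kk G" using s by (simp add: sgz_def ik_iff[OF G])

lemma s_eq: "s = cscale \<i> sgz" by (simp add: sgz_def cscale_ii'')

lemma k_kk: "k \<in> kk G" using k by (simp add: zk_perp_def)

lemma lam_ik: "lam \<in> ik G" and lam_comm: "brk s lam = 0"
proof -
  obtain \<mu> where \<mu>: "\<mu> \<in> kk G" "brk \<mu> s = 0" "lam = cscale \<i> \<mu>"
    using lam by (auto simp: zk_def)
  show "lam \<in> ik G" using \<mu> by (simp add: ik_of_kk[OF G])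
  have "brk lam s = 0" using \<mu> by (simp add: brk_cscale_left)
  then show "brk s lam = 0" by (metis brk_antisym neg_equal_0_iff_equal)
qed

lemma inv_inf:
  assumes x: "x \<in> ik G" and y: "y \<in> ik G"
  shows "L (brk sgz x) y + L x (brk sgz y) = 0"
proof -
  define c where "c z t = mexp (t *\<^sub>R sgz) ** z ** mexp (t *\<^sub>R (- sgz))" for z t
  have const: "L (c x t) (c y t) = ip x y" for t
  proof -
    have g: "mexp (t *\<^sub>R sgz) \<in> maxK G" using sgz_kk by (simp add: kk_iff[OF G])
    have ag: "adj (mexp (t *\<^sub>R sgz)) = mexp (t *\<^sub>R (- sgz))" by (rule mexp_minus_adj[OF G sgz_kk])
    have mi: "matrix_inv (mexp (t *\<^sub>R sgz)) = mexp (t *\<^sub>R (- sgz))"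
      by (simp only: matrix_inv_mexp scaleR_minus_right)
    have "c x t \<in> ik G" "c y t \<in> ik G" using maxK_ik[OF G g] x y ag by (simp_all add: c_def)
    then have "L (c x t) (c y t) = ip (c x t) (c y t)" by (rule L_ip)
    also have "\<dots> = ip x y"
    proof -
      have e: "ip (mexp (t *\<^sub>R sgz) ** x ** matrix_inv (mexp (t *\<^sub>R sgz)))
                 (mexp (t *\<^sub>R sgz) ** y ** matrix_inv (mexp (t *\<^sub>R sgz))) = ip x y"
        using inv g x y by blast
      show ?thesis using e unfolding c_def mi .
    qed
    finally show ?thesis .
  qed
  have "((\<lambda>t. L (c x t) (c y t)) has_vector_derivative
          (L (c x 0) (brk sgz y) + L (brk sgz x) (c y 0))) (at 0)"
    unfolding c_def brk_def
    by (rule bounded_bilinear.has_vector_derivative[OF L_bb conj_vd[OF G] conj_vd[OF G]])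
  moreover have "((\<lambda>t. L (c x t) (c y t)) has_vector_derivative 0) (at 0)"
    by (simp add: const)
  ultimately have "L (c x 0) (brk sgz y) + L (brk sgz x) (c y 0) = 0"
    by (rule vector_derivative_unique_at)
  then show ?thesis by (simp add: c_def add.commute)
qed

lemma brk_s: "brk s z = cscale \<i> (brk sgz z)"
  by (metis brk_cscale_left s_eq)

lemma CC: "adc s (adc s x) = - brk sgz (brk sgz x)"
  by (simp add: adc_brk brk_s brk_cscale_right cscale_ii)

lemma adc_kk_ik: "z \<in> kk G \<Longrightarrow> adc s z \<in> ik G"
  using brk_ik_kk[OF G s] by (simp add: adc_brk)

lemma adc_ik_kk: "z \<in> ik G \<Longrightarrow> adc s z \<in> kk G"
  using brk_ik_ik[OF G s] by (simp add: adc_brk)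

lemma brk_sgz_ik: "z \<in> ik G \<Longrightarrow> brk sgz z \<in> ik G"
  using brk_kk_ik[OF G sgz_kk] .

lemma Lsym2:
  assumes x: "x \<in> ik G" and y: "y \<in> ik G"
  shows "L (adc s (adc s x)) y = L (brk sgz x) (brk sgz y)"
proof -
  have "L (adc s (adc s x)) y = - L (brk sgz (brk sgz x)) y"
    by (simp add: CC bounded_bilinear.minus_left[OF L_bb])
  also have "\<dots> = L (brk sgz x) (brk sgz y)"
    using inv_inf[OF brk_sgz_ik[OF x] y] by simp
  finally show ?thesis .
qed

lemma Lsym2':
  assumes x: "x \<in> ik G" and y: "y \<in> ik G"
  shows "L (adc s (adc s x)) y = L x (adc s (adc s y))"
proof -
  have "L (adc s (adc s x)) y = L (brk sgz x) (brk sgz y)" by (rule Lsym2[OF x y])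
  also have "\<dots> = L (brk sgz y) (brk sgz x)" by (rule L_sym[OF brk_sgz_ik[OF x] brk_sgz_ik[OF y]])
  also have "\<dots> = L (adc s (adc s y)) x" by (rule Lsym2[OF y x, symmetric])
  also have "\<dots> = L x (adc s (adc s y))"
    by (rule L_sym[OF adc_kk_ik[OF adc_ik_kk[OF y]] x])
  finally show ?thesis .
qed

lemma pow2_eq: "(adc s ^^ (2 * Suc a)) x = (adc s ^^ (2 * a)) (adc s (adc s x))"
  by (simp add: funpow_Suc_right del: funpow.simps)

lemma pow2_eq': "(adc s ^^ (2 * Suc a)) x = adc s (adc s ((adc s ^^ (2 * a)) x))"
  by simp

lemma pow_ik: "x \<in> ik G \<Longrightarrow> (adc s ^^ (2 * a)) x \<in> ik G"
  by (induction a) (simp_all add: adc_kk_ik adc_ik_kk)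

lemma powmove:
  assumes x: "x \<in> ik G" and y: "y \<in> ik G"
  shows "L ((adc s ^^ (2 * a)) x) ((adc s ^^ (2 * b)) y) = L x ((adc s ^^ (2 * (a + b))) y)"
  using x
proof (induction a arbitrary: x)
  case 0 then show ?case by simp
next
  case (Suc a)
  have x': "adc s (adc s x) \<in> ik G" using Suc.prems by (intro adc_kk_ik adc_ik_kk)
  have "L ((adc s ^^ (2 * Suc a)) x) ((adc s ^^ (2 * b)) y)
      = L (adc s (adc s x)) ((adc s ^^ (2 * (a + b))) y)"
    by (simp only: pow2_eq Suc.IH[OF x'])
  also have "\<dots> = L x (adc s (adc s ((adc s ^^ (2 * (a + b))) y)))"
    by (rule Lsym2'[OF Suc.prems pow_ik[OF y]])
  also have "\<dots> = L x ((adc s ^^ (2 * (Suc a + b))) y)"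
    by (simp only: pow2_eq'[symmetric] add_Suc)
  finally show ?case .
qed

lemma pow_nonneg:
  assumes x: "x \<in> ik G"
  shows "0 \<le> L x ((adc s ^^ (2 * m)) x)"
proof (cases "even m")
  case True
  then obtain j where m: "m = j + j" by (metis evenE mult_2)
  have "L x ((adc s ^^ (2 * m)) x) = L ((adc s ^^ (2 * j)) x) ((adc s ^^ (2 * j)) x)"
    using powmove[OF x x, of j j] by (simp add: m)
  then show ?thesis using L_pos[OF pow_ik[OF x]] by simp
next
  case False
  then obtain j where m: "m = Suc (j + j)" by (metis oddE mult_2 Suc_eq_plus1)
  define z where "z = (adc s ^^ (2 * j)) x"
  have z: "z \<in> ik G" unfolding z_def by (rule pow_ik[OF x])
  have "L x ((adc s ^^ (2 * m)) x) = L ((adc s ^^ (2 * j)) x) ((adc s ^^ (2 * Suc j)) x)"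
    using powmove[OF x x, of j "Suc j"] by (simp add: m)
  also have "\<dots> = L z (adc s (adc s z))" by (simp add: z_def)
  also have "\<dots> = L (brk sgz z) (brk sgz z)"
    using Lsym2[OF z z] L_sym[OF z adc_kk_ik[OF adc_ik_kk[OF z]]] by simp
  finally show ?thesis using L_pos[OF brk_sgz_ik[OF z]] by simp
qed

definition T :: "nat \<Rightarrow> 'n cmat" where "T n = (adc s ^^ n) k"

lemma T_0: "T 0 = k" by (simp add: T_def)

lemma T_Suc: "T (Suc n) = adc s (T n)" by (simp add: T_def)

lemma T_par: "(even n \<longrightarrow> T n \<in> kk G) \<and> (odd n \<longrightarrow> T n \<in> ik G)"
  by (induction n) (auto simp: T_0 T_Suc k_kk adc_kk_ik adc_ik_kk)

lemma T_even: "even n \<Longrightarrow> T n \<in> kk G" using T_par by blast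
lemma T_odd: "odd n \<Longrightarrow> T n \<in> ik G" using T_par by blast

lemma T_odd_form: "T (Suc (2 * a)) = (adc s ^^ (2 * a)) (T 1)"
  unfolding T_def by (simp only: Suc_eq_plus1 funpow_add o_def)

lemma w_ik: "T 1 \<in> ik G" by (rule T_odd) simp

lemma T_odd_nonneg:
  assumes "odd p" "odd q" shows "0 \<le> L (T p) (T q)"
proof -
  obtain a b where ab: "p = Suc (2 * a)" "q = Suc (2 * b)"
    using assms by (metis oddE Suc_eq_plus1)
  have "L (T p) (T q) = L (T 1) ((adc s ^^ (2 * (a + b))) (T 1))"
    unfolding ab T_odd_form by (rule powmove[OF w_ik w_ik])
  then show ?thesis using pow_nonneg[OF w_ik, of "a + b"] by (simp only:)
qed

lemma lam_orth: assumes z: "z \<in> kk G" shows "L lam (adc s z) = 0"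
proof -
  have y: "cscale \<i> z \<in> ik G" by (rule ik_of_kk[OF G z])
  have "adc s z = brk sgz (cscale \<i> z)" by (simp add: adc_brk brk_s brk_cscale_right)
  moreover have "brk sgz lam = 0"
  proof -
    have "cscale \<i> (brk sgz lam) = 0" using lam_comm by (simp add: brk_s)
    then have "cscale (- \<i>) (cscale \<i> (brk sgz lam)) = 0" by simp
    then show ?thesis by (simp only: cscale_ii')
  qed
  moreover have "L (brk sgz lam) (cscale \<i> z) + L lam (brk sgz (cscale \<i> z)) = 0"
    by (rule inv_inf[OF lam_ik y])
  ultimately show ?thesis by (simp add: bounded_bilinear.zero_left[OF L_bb])
qed

lemma lam_orth_T: assumes "odd p" shows "L lam (T p) = 0" "L (T p) lam = 0"
proof -
  obtain b where b: "p = 2 * b + 1" using assms by (rule oddE)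
  define q where "q = 2 * b"
  have q: "p = Suc q" "even q" using b by (simp_all add: q_def)
  show "L lam (T p) = 0" using lam_orth[OF T_even[OF q(2)]] by (simp add: q T_Suc)
  then show "L (T p) lam = 0" using L_sym[OF lam_ik T_odd[OF assms]] by simp
qed

definition aser :: "nat \<Rightarrow> 'n cmat" where "aser n = (1 / fact n) *\<^sub>R T n"
definition ae :: "nat \<Rightarrow> 'n cmat" where "ae n = (if even n then aser n else 0)"
definition ao :: "nat \<Rightarrow> 'n cmat" where "ao n = (if odd n then aser n else 0)"
definition Ce :: "'n cmat" where "Ce = suminf ae"
definition Co :: "'n cmat" where "Co = suminf ao"

lemma a_sums: "aser sums (mexp s ** k ** mexp (- s))"
  unfolding aser_def T_def by (rule Ad_sums)

lemma a_abs: "summable (\<lambda>n. norm (aser n))"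
  unfolding aser_def T_def by (rule Ad_abs_summable)

lemma ae_sums: "ae sums Ce"
  unfolding Ce_def ae_def by (rule summable_sums[OF summable_if_abs[OF a_abs]])

lemma ao_sums: "ao sums Co"
  unfolding Co_def ao_def by (rule summable_sums[OF summable_if_abs[OF a_abs]])

lemma Ce_kk: "Ce \<in> kk G"
  by (rule sums_in_closed_subspace[OF subspace_kk[OF G] ae_sums])
     (simp add: ae_def aser_def T_even kk_zero[OF G] kk_scale[OF G])

lemma Co_ik: "Co \<in> ik G"
  by (rule sums_in_closed_subspace[OF subspace_ik[OF G] ao_sums])
     (simp add: ao_def aser_def T_odd subspace_0[OF subspace_ik[OF G]] subspace_scale[OF subspace_ik[OF G]])

lemma Ad_split: "mexp s ** k ** mexp (- s) = Ce + Co"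
proof -
  have "(\<lambda>n. ae n + ao n) sums (Ce + Co)" by (rule sums_add[OF ae_sums ao_sums])
  moreover have "(\<lambda>n. ae n + ao n) = aser" by (simp add: fun_eq_iff ae_def ao_def)
  ultimately show ?thesis using a_sums sums_unique2 by metis
qed

definition sgm :: "'n cmat" where "sgm = frechet_derivative mexp (at s) sd ** mexp (- s)"

lemma sgm_formula: "sgm = lam + (k - mexp s ** k ** matrix_inv (mexp s))"
proof -
  have c: "lam ** s = s ** lam" using lam_comm by (simp add: brk_def)
  have "sgm = frechet_derivative mexp (at s) (lam + brk k s) ** mexp (- s)"
    unfolding sgm_def by (simp only: dec)
  also have "\<dots> = (lam ** mexp s + (k ** mexp s - mexp s ** k)) ** mexp (- s)"
    by (simp only: frechet_mexp[OF c])
  also have "\<dots> = lam ** (mexp s ** mexp (- s)) + (k ** (mexp s ** mexp (- s)) - mexp s ** k ** mexp (- s))"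
    by (simp add: matrix_add_rdistrib' matrix_sub_rdistrib' matrix_mul_assoc)
  also have "\<dots> = lam + (k - mexp s ** k ** matrix_inv (mexp s))"
    by (simp add: mexp_minus_right matrix_inv_mexp)
  finally show ?thesis .
qed

lemma sgm_dec: "sgm = (k - Ce) + (lam - Co)"
  using sgm_formula Ad_split by (simp add: matrix_inv_mexp algebra_simps)

lemma pk_sgm: "p_k G sgm = k - Ce"
  unfolding sgm_dec by (rule p_k_eq[OF G kk_diff[OF G k_kk Ce_kk] subspace_diff[OF subspace_ik[OF G] lam_ik Co_ik]])

lemma pik_sgm: "p_ik G sgm = lam - Co"
  unfolding sgm_dec by (rule p_ik_eq[OF G kk_diff[OF G k_kk Ce_kk] subspace_diff[OF subspace_ik[OF G] lam_ik Co_ik]])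

lemmas Lbb = L_bb
lemmas L_add_left = bounded_bilinear.add_left[OF L_bb]
lemmas L_add_right = bounded_bilinear.add_right[OF L_bb]
lemmas L_diff_left = bounded_bilinear.diff_left[OF L_bb]
lemmas L_diff_right = bounded_bilinear.diff_right[OF L_bb]
lemmas L_scale_left = bounded_bilinear.scaleR_left[OF L_bb]
lemmas L_scale_right = bounded_bilinear.scaleR_right[OF L_bb]
lemmas L_zero_left = bounded_bilinear.zero_left[OF L_bb]
lemmas L_zero_right = bounded_bilinear.zero_right[OF L_bb]

lemma T1: "T 1 = adc s k" by (simp add: T_def)

lemma brk_k_s: "brk k s = - T 1"
  using brk_antisym[of k s] T1 by (simp add: adc_brk)

lemma sd_eq: "sd = lam - T 1"
  by (simp add: dec brk_k_s)

lemma part2: "ip sd (p_ik G sgm) \<ge> ip sd sd"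
proof -
  define w where "w = T 1"
  have w: "w \<in> ik G" unfolding w_def by (rule w_ik)
  have v: "lam - Co \<in> ik G" by (rule subspace_diff[OF subspace_ik[OF G] lam_ik Co_ik])
  define f where "f m = (if odd m then (1 / fact m) * L w (T m) else 0)" for m
  have "(\<lambda>m. L sd (ao m)) sums L sd Co"
    by (rule bounded_linear.sums[OF bounded_bilinear.bounded_linear_right[OF L_bb] ao_sums])
  moreover have "L sd (ao m) = - f m" for m
  proof (cases "odd m")
    case True
    have "L sd (ao m) = (1 / fact m) * (L lam (T m) - L w (T m))"
      using True by (simp add: ao_def aser_def L_scale_right sd_eq w_def L_diff_left)
    then show ?thesis using True lam_orth_T(1)[OF True] by (simp add: f_def)
  next
    case False then show ?thesis by (simp add: ao_def f_def L_zero_right)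
  qed
  ultimately have "(\<lambda>m. - f m) sums L sd Co" by simp
  then have fs: "f sums (- L sd Co)" using sums_minus by fastforce
  have f0: "0 \<le> f m" for m
    unfolding f_def w_def using T_odd_nonneg[of 1 m] by simp
  have "sum f {1} \<le> suminf f"
    by (rule sum_le_suminf[OF sums_summable[OF fs]]) (simp_all add: f0)
  then have fw: "L w w \<le> - L sd Co"
    using sums_unique[OF fs] by (simp add: f_def w_def)
  have ow1: "L (T 1) lam = 0" by (rule lam_orth_T(2)) simp
  have ow2: "L lam (T 1) = 0" by (rule lam_orth_T(1)) simp
  have ow: "L w lam = 0" "L lam w = 0" unfolding w_def by (fact ow1, fact ow2)
  have sdw: "sd = lam - w" unfolding w_def by (rule sd_eq)
  have "ip sd (p_ik G sgm) = L sd (lam - Co)" by (simp add: pik_sgm L_ip[OF sd v])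
  also have "\<dots> = L sd lam - L sd Co" by (rule L_diff_right)
  also have "L sd lam = L lam lam" unfolding sdw L_diff_left ow(1) by simp
  also have "L lam lam - L sd Co \<ge> L lam lam + L w w" using fw by simp
  also have "L lam lam + L w w = L sd sd"
    unfolding sdw L_diff_left L_diff_right ow by simp
  also have "\<dots> = ip sd sd" by (rule L_ip[OF sd sd])
  finally show ?thesis .
qed

lemma bl_brk_s: "bounded_linear (\<lambda>X. brk X s)"
proof (rule bounded_linearI')
  fix x y :: "'n cmat"
  show "brk (x + y) s = brk x s + brk y s"
    by (simp add: brk_def matrix_add_rdistrib' matrix_add_ldistrib)
next
  fix c :: real and x :: "'n cmat"
  have "s ** (c *\<^sub>R x) = c *\<^sub>R (s ** x)" by (simp add: matrix_scalar_ac scalar_matrix_assoc)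
  moreover have "(c *\<^sub>R x) ** s = c *\<^sub>R (x ** s)" by (simp add: scalar_matrix_assoc)
  ultimately show "brk (c *\<^sub>R x) s = c *\<^sub>R brk x s" by (simp add: brk_def scaleR_diff_right)
qed

lemma brk_T: "brk (T n) s = - T (Suc n)"
  using brk_antisym[of "T n" s] by (simp add: T_Suc adc_brk)

definition be :: "nat \<Rightarrow> 'n cmat" where
  "be n = (if even n \<and> n \<noteq> 0 then (1 / fact n) *\<^sub>R T (Suc n) else 0)"

lemma be_sums: "be sums brk (k - Ce) s"
proof -
  define D where "D n = (if even n then (1 / fact n) *\<^sub>R T (Suc n) else 0)" for n
  have "(\<lambda>n. brk (ae n) s) sums brk Ce s" by (rule bounded_linear.sums[OF bl_brk_s ae_sums])
  moreover have "brk (ae n) s = - D n" for n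
    by (simp add: ae_def aser_def D_def linear_scale[OF bounded_linear.linear[OF bl_brk_s]] brk_T
                  linear_0[OF bounded_linear.linear[OF bl_brk_s]])
  ultimately have "(\<lambda>n. - D n) sums brk Ce s" by simp
  then have Ds: "D sums (- brk Ce s)" using sums_minus by fastforce
  have "(\<lambda>n. D n - (if n = 0 then T 1 else 0)) sums (- brk Ce s - T 1)"
    by (rule sums_diff[OF Ds]) (use sums_single[of 0 "\<lambda>_. T 1"] in simp)
  moreover have "(\<lambda>n. D n - (if n = 0 then T 1 else 0)) = be"
    by (simp add: fun_eq_iff D_def be_def)
  moreover have "brk (k - Ce) s = - brk Ce s - T 1"
    using linear_diff[OF bounded_linear.linear[OF bl_brk_s], of k Ce] brk_k_s by simp
  ultimately show ?thesis by simp
qed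

lemma T_ge2: "T 2 = 0 \<Longrightarrow> T (n + 2) = 0"
proof (induction n)
  case 0 then show ?case by (simp add: numeral_2_eq_2)
next
  case (Suc n)
  have "T (Suc n + 2) = adc s (T (n + 2))" by (simp only: add_Suc T_Suc)
  also have "\<dots> = 0" using Suc by (simp add: adc_def)
  finally show ?case .
qed

lemma brk_sd_s: "brk sd s = T 2"
proof -
  have "brk lam s = 0" using lam_comm brk_antisym[of lam s] by simp
  moreover have "brk sd s = brk lam s - brk (T 1) s"
    using linear_diff[OF bounded_linear.linear[OF bl_brk_s], of lam "T 1"] sd_eq by simp
  ultimately show ?thesis by (simp add: brk_T numeral_2_eq_2)
qed

lemma key_zk: "sd \<in> cscale \<i> ` zk G s \<longleftrightarrow> T 2 = 0"
proof
  assume "sd \<in> cscale \<i> ` zk G s"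
  then obtain Y where Y: "Y \<in> kk G" "brk Y s = 0" "sd = cscale \<i> Y" by (auto simp: zk_def)
  then have "brk sd s = 0" by (simp add: brk_cscale_left)
  then show "T 2 = 0" by (simp add: brk_sd_s)
next
  assume T2: "T 2 = 0"
  define Y where "Y = cscale (- \<i>) sd"
  have Yk: "Y \<in> kk G" using sd by (simp add: Y_def ik_iff[OF G])
  have "brk Y s = cscale (- \<i>) (brk sd s)" by (simp add: Y_def brk_cscale_left)
  then have "brk Y s = 0" using T2 by (simp add: brk_sd_s)
  then have "Y \<in> zk G s" using Yk by (simp add: zk_def)
  moreover have "sd = cscale \<i> Y" by (simp add: Y_def cscale_ii'')
  ultimately show "sd \<in> cscale \<i> ` zk G s" by blast
qed

lemma part3:
  "ip (brk (p_k G sgm) s) (p_ik G sgm) \<le> 0 \<and> (ip (brk (p_k G sgm) s) (p_ik G sgm) = 0 \<longleftrightarrow> T 2 = 0)"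
proof -
  define u where "u = k - Ce"
  define v where "v = lam - Co"
  have uk: "u \<in> kk G" unfolding u_def by (rule kk_diff[OF G k_kk Ce_kk])
  have vi: "v \<in> ik G" unfolding v_def by (rule subspace_diff[OF subspace_ik[OF G] lam_ik Co_ik])
  have bu: "brk u s \<in> ik G" by (rule brk_kk_ik[OF G uk s])
  have V: "ip (brk (p_k G sgm) s) (p_ik G sgm) = L (brk u s) v"
    by (simp add: pk_sgm pik_sgm u_def[symmetric] v_def[symmetric] L_ip[OF bu vi])
  define h where "h p m = (if odd m then (1 / fact m) * L (T p) (T m) else 0)" for p m
  have hs: "h p sums L (T p) Co" for p
  proof -
    have "(\<lambda>m. L (T p) (ao m)) sums L (T p) Co"
      by (rule bounded_linear.sums[OF bounded_bilinear.bounded_linear_right[OF L_bb] ao_sums])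
    moreover have "(\<lambda>m. L (T p) (ao m)) = h p"
      by (simp add: fun_eq_iff h_def ao_def aser_def L_scale_right L_zero_right)
    ultimately show ?thesis by simp
  qed
  have hnn: "odd p \<Longrightarrow> 0 \<le> h p m" for p m
    unfolding h_def using T_odd_nonneg[of p m] by simp
  have Cnn: "odd p \<Longrightarrow> 0 \<le> L (T p) Co" for p
    using sums_unique[OF hs[of p]] suminf_nonneg[OF sums_summable[OF hs[of p]]] hnn by metis
  define g where "g n = (if even n \<and> n \<noteq> 0 then (1 / fact n) * L (T (Suc n)) Co else 0)" for n
  have gnn: "0 \<le> g n" for n
    unfolding g_def using Cnn[of "Suc n"] by simp
  have "(\<lambda>n. L (be n) v) sums L (brk u s) v"
    unfolding u_def by (rule bounded_linear.sums[OF bounded_bilinear.bounded_linear_left[OF L_bb] be_sums])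
  moreover have "L (be n) v = - g n" for n
  proof (cases "even n \<and> n \<noteq> 0")
    case True
    then have o: "odd (Suc n)" by simp
    show ?thesis using True lam_orth_T(2)[OF o]
      by (simp add: be_def g_def v_def L_scale_left L_diff_right)
  next
    case False
    then have "be n = 0" "g n = 0" by (simp_all only: be_def g_def if_False)
    then show ?thesis by (simp add: L_zero_left)
  qed
  ultimately have "(\<lambda>n. - g n) sums L (brk u s) v" by simp
  then have gs: "g sums (- L (brk u s) v)" using sums_minus by fastforce
  have sg: "summable g" using gs by (rule sums_summable)
  have gval: "- L (brk u s) v = suminf g" by (rule sums_unique[OF gs])
  have le: "L (brk u s) v \<le> 0" using suminf_nonneg[OF sg gnn] gval by linarith
  have "L (brk u s) v = 0 \<longleftrightarrow> suminf g = 0" using gval by auto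
  also have "\<dots> \<longleftrightarrow> (\<forall>n. g n = 0)" by (rule suminf_eq_zero_iff[OF sg gnn])
  also have "\<dots> \<longleftrightarrow> T 2 = 0"
  proof
    assume all: "\<forall>n. g n = 0"
    have "g 2 = (1 / 2) * L (T 3) Co" by (simp add: g_def numeral_3_eq_3 numeral_2_eq_2)
    then have "L (T 3) Co = 0" using all by simp
    then have "suminf (h 3) = 0" using sums_unique[OF hs[of 3]] by simp
    then have "\<forall>m. h 3 m = 0"
      using suminf_eq_zero_iff[OF sums_summable[OF hs[of 3]]] hnn[of 3] by simp
    then have "h 3 1 = 0" by blast
    then have "L (T 3) (T 1) = 0" by (simp add: h_def)
    moreover have "T 3 = adc s (adc s (T 1))" by (simp add: T_Suc numeral_3_eq_3)
    ultimately have "L (brk sgz (T 1)) (brk sgz (T 1)) = 0" using Lsym2[OF w_ik w_ik] by simp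
    then have "brk sgz (T 1) = 0" by (rule L_def0[OF brk_sgz_ik[OF w_ik]])
    then have "adc s (T 1) = 0" by (simp add: adc_brk brk_s)
    then show "T 2 = 0" by (simp add: T_Suc numeral_2_eq_2)
  next
    assume T2: "T 2 = 0"
    show "\<forall>n. g n = 0"
    proof
      fix n
      show "g n = 0"
      proof (cases "even n \<and> n \<noteq> 0")
        case True
        then obtain m where "Suc n = m + 2" by (metis add_2_eq_Suc' not0_implies_Suc)
        then have "T (Suc n) = 0" using T_ge2[OF T2] by simp
        then show ?thesis by (simp add: g_def L_zero_left)
      next
        case False then show ?thesis by (simp only: g_def if_False)
      qed
    qed
  qed
  finally show ?thesis using le V by simp
qed

lemma main:
  "let \<sigma> = frechet_derivative mexp (at s) sd ** mexp (- s) in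
           \<sigma> = lam + (k - mexp s ** k ** matrix_inv (mexp s))
         \<and> ip sd (p_ik G \<sigma>) \<ge> ip sd sd
         \<and> ip (brk (p_k G \<sigma>) s) (p_ik G \<sigma>) \<le> 0
         \<and> (ip (brk (p_k G \<sigma>) s) (p_ik G \<sigma>) = 0 \<longleftrightarrow> sd \<in> cscale \<i> ` zk G s)"
  unfolding Let_def sgm_def[symmetric] using sgm_formula part2 part3 key_zk by simp

end


theorem propositionA:
  fixes G :: "'n::finite cmat set"
    and ip :: "'n cmat \<Rightarrow> 'n cmat \<Rightarrow> real"
    and s sd lam k :: "'n cmat"
  assumes G: "complex_reductive G"
    and ip: "euclid_ip_on (ik G) ip"
    and inv: "\<forall>g\<in>maxK G. \<forall>x\<in>ik G. \<forall>y\<in>ik G.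
                ip (g ** x ** matrix_inv g) (g ** y ** matrix_inv g) = ip x y"
    and s: "s \<in> ik G" and sd: "sd \<in> ik G"
    and lam: "lam \<in> cscale \<i> ` zk G s"
    and k: "k \<in> zk_perp G ip s"
    and dec: "sd = lam + brk k s"
  shows "let \<sigma> = frechet_derivative mexp (at s) sd ** mexp (- s) in
           \<sigma> = lam + (k - mexp s ** k ** matrix_inv (mexp s))
         \<and> ip sd (p_ik G \<sigma>) \<ge> ip sd sd
         \<and> ip (brk (p_k G \<sigma>) s) (p_ik G \<sigma>) \<le> 0
         \<and> (ip (brk (p_k G \<sigma>) s) (p_ik G \<sigma>) = 0 \<longleftrightarrow> sd \<in> cscale \<i> ` zk G s)"
  by (rule main[OF G ip inv s sd lam k dec])

end
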